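(* Let $\Gamma$ be a finite nilpotent group of order $n=\prod_{p\mid n}p^{v_p}$, and for each prime $p\mid n$ let $\Gamma_p$ denote the Sylow $p$-subgroup of $\Gamma$. Then for every nilpotent group $G$ of order $n$, with Sylow $p$-subgroups $G_p$, we have $$e(\Gamma,G)=\prod_{p\mid n} e(\Gamma_p,G_p).$$
   Context: For finite groups $\Gamma$ and $G$ of the same order, $e(\Gamma,G)$ denotes the number of Hopf-Galois structures of type $G$ on a Galois field extension $L/K$ with $\mathrm{Gal}(L/K)\cong\Gamma$. Here a Hopf-Galois structure given by a $K$-Hopf algebra $H$ has type $G$ if $L\otimes_K H\cong L[G]$ for the corresponding regular permutation group $G$ on $\Gamma$ (Greither–Pareigis). Equivalently (and this is the working definition), $e(\Gamma,G)$ is the number of equivalence classes of regular embeddings $\beta:\Gamma\to\mathrm{Hol}(G)$, where $\mathrm{Hol}(G)=\rho(G)\cdot\mathrm{Aut}(G)\subseteq \mathrm{Perm}(G)$ is the holomorph of $G$ with $\rho(g)(x)=xg^{-1}$, a regular embedding is an injective homomorphism whose image acts regularly (simply transitively) on $G$, and two regular embeddings are equivalent if they are conjugate by an element of $\mathrm{Aut}(G)$. A finite group is nilpotent iff it is the direct product of its Sylow subgroups. *)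

theory Defs
  imports "HOL-Algebra.Algebra" "HOL-Computational_Algebra.Primes"
begin

fun lower_central :: "('a, 'b) monoid_scheme \<Rightarrow> nat \<Rightarrow> 'a set" where
  "lower_central G 0 = carrier G"
| "lower_central G (Suc i) =
     generate G (\<Union>x \<in> carrier G. \<Union>y \<in> lower_central G i.
        {x \<otimes>\<^bsub>G\<^esub> y \<otimes>\<^bsub>G\<^esub> inv\<^bsub>G\<^esub> x \<otimes>\<^bsub>G\<^esub> inv\<^bsub>G\<^esub> y})"

definition nilpotent_group :: "('a, 'b) monoid_scheme \<Rightarrow> bool" where
  "nilpotent_group G \<longleftrightarrow> group G \<and> (\<exists>k. lower_central G k = {\<one>\<^bsub>G\<^esub>})"

(* Holomorph Hol(G) = rho(G) Aut(G) inside Perm(G), rho(g)(x) = x g^{-1} *)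
definition holomorph :: "('a, 'b) monoid_scheme \<Rightarrow> ('a \<Rightarrow> 'a) set" where
  "holomorph G = {f. \<exists>\<alpha> \<in> auto G. \<exists>g \<in> carrier G.
      f = (\<lambda>x \<in> carrier G. \<alpha> x \<otimes>\<^bsub>G\<^esub> inv\<^bsub>G\<^esub> g)}"

definition regular_embeddings ::
  "('a, 'c) monoid_scheme \<Rightarrow> ('b, 'd) monoid_scheme \<Rightarrow> ('a \<Rightarrow> 'b \<Rightarrow> 'b) set" where
  "regular_embeddings \<Gamma> G = {\<beta>.
      \<beta> \<in> extensional (carrier \<Gamma>) \<and>
      \<beta> \<in> hom \<Gamma> (BijGroup (carrier G)) \<and>
      inj_on \<beta> (carrier \<Gamma>) \<and>
      \<beta> ` carrier \<Gamma> \<subseteq> holomorph G \<and>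
      (\<forall>x \<in> carrier G. \<forall>y \<in> carrier G. \<exists>!\<gamma>. \<gamma> \<in> carrier \<Gamma> \<and> \<beta> \<gamma> x = y)}"

definition aut_conj_rel ::
  "('a, 'c) monoid_scheme \<Rightarrow> ('b, 'd) monoid_scheme \<Rightarrow> (('a \<Rightarrow> 'b \<Rightarrow> 'b) \<times> ('a \<Rightarrow> 'b \<Rightarrow> 'b)) set" where
  "aut_conj_rel \<Gamma> G = {(\<beta>, \<beta>'). \<beta> \<in> regular_embeddings \<Gamma> G \<and> \<beta>' \<in> regular_embeddings \<Gamma> G \<and>
      (\<exists>\<alpha> \<in> auto G. \<forall>\<gamma> \<in> carrier \<Gamma>. \<forall>x \<in> carrier G. \<beta>' \<gamma> (\<alpha> x) = \<alpha> (\<beta> \<gamma> x))}"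

definition hgs_count :: "('a, 'c) monoid_scheme \<Rightarrow> ('b, 'd) monoid_scheme \<Rightarrow> nat" where
  "hgs_count \<Gamma> G = card (regular_embeddings \<Gamma> G // aut_conj_rel \<Gamma> G)"

definition sylow_subgroup :: "('a, 'b) monoid_scheme \<Rightarrow> nat \<Rightarrow> 'a set \<Rightarrow> bool" where
  "sylow_subgroup G p P \<longleftrightarrow> subgroup P G \<and>
      card P = p ^ multiplicity p (order G)"

end

theory Submission
  imports Defs
begin

lemma (in group) coprime_pow_one:
  assumes "x \<in> carrier G" "x [^] (m::nat) = \<one>" "x [^] (k::nat) = \<one>" "coprime m k"
  shows "x = \<one>"
proof -
  have "ord x dvd m" "ord x dvd k" using assms pow_eq_id by auto
  then have "ord x dvd gcd m k" by simp
  then have "ord x = 1" using assms(4) by simp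
  then show ?thesis using ord_eq_1 assms(1) by simp
qed

lemma (in group) subgroup_pow_card:
  assumes "subgroup H G" "finite H" "x \<in> H"
  shows "x [^] card H = \<one>"
proof -
  interpret H: group "G\<lparr>carrier := H\<rparr>" using subgroup_imp_group assms(1) .
  have "x [^]\<^bsub>G\<lparr>carrier := H\<rparr>\<^esub> order (G\<lparr>carrier := H\<rparr>) = \<one>\<^bsub>G\<lparr>carrier := H\<rparr>\<^esub>"
    using H.pow_order_eq_1 assms(3) by simp
  then show ?thesis by (simp add: order_def nat_pow_consistent[symmetric])
qed

definition pa :: "('a, 'c) monoid_scheme \<Rightarrow> 'a set \<Rightarrow> 'a set \<Rightarrow> 'a \<Rightarrow> 'a" where
  "pa K A B k = (THE a. a \<in> A \<and> (\<exists>b\<in>B. k = a \<otimes>\<^bsub>K\<^esub> b))"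

locale dprod = group K for K (structure) +
  fixes A B
  assumes sA: "subgroup A K" and sB: "subgroup B K"
    and nA: "\<And>x h. x \<in> carrier K \<Longrightarrow> h \<in> A \<Longrightarrow> x \<otimes> h \<otimes> inv x \<in> A"
    and nB: "\<And>x h. x \<in> carrier K \<Longrightarrow> h \<in> B \<Longrightarrow> x \<otimes> h \<otimes> inv x \<in> B"
    and finK: "finite (carrier K)"
    and cop: "coprime (card A) (card B)"
    and cardK: "card A * card B = card (carrier K)"
begin

lemma swap: "dprod K B A"
  unfolding dprod_def dprod_axioms_def using sA sB nA nB finK cop cardK is_group
  by (simp add: coprime_commute mult.commute)

lemma A_sub: "A \<subseteq> carrier K" using sA subgroup.subset by blast
lemma B_sub: "B \<subseteq> carrier K" using sB subgroup.subset by blast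
lemma finA: "finite A" using A_sub finK finite_subset by blast
lemma finB: "finite B" using B_sub finK finite_subset by blast
lemma inA: "a \<in> A \<Longrightarrow> a \<in> carrier K" using A_sub by blast
lemma inB: "b \<in> B \<Longrightarrow> b \<in> carrier K" using B_sub by blast

lemma powA: "a \<in> A \<Longrightarrow> a [^] card A = \<one>"
  using subgroup_pow_card sA finA by blast
lemma powB: "b \<in> B \<Longrightarrow> b [^] card B = \<one>"
  using subgroup_pow_card sB finB by blast

lemma inter: "x \<in> A \<Longrightarrow> x \<in> B \<Longrightarrow> x = \<one>"
  using coprime_pow_one[of x "card A" "card B"] powA powB cop inA by blast

lemma comm: assumes "a \<in> A" "b \<in> B" shows "a \<otimes> b = b \<otimes> a"
proof -
  have a: "a \<in> carrier K" and b: "b \<in> carrier K" using assms inA inB by auto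
  have "b \<otimes> inv a \<otimes> inv b \<in> A" using nA[OF b subgroup.m_inv_closed[OF sA assms(1)]] .
  then have 1: "a \<otimes> (b \<otimes> inv a \<otimes> inv b) \<in> A" using subgroup.m_closed[OF sA assms(1)] by blast
  have "a \<otimes> b \<otimes> inv a \<in> B" using nB[OF a assms(2)] .
  then have 2: "a \<otimes> b \<otimes> inv a \<otimes> inv b \<in> B" using subgroup.m_closed[OF sB _ subgroup.m_inv_closed[OF sB assms(2)]] by blast
  have "a \<otimes> b \<otimes> inv a \<otimes> inv b = \<one>" using inter 1 2 a b by (simp add: m_assoc)
  then have "a \<otimes> b \<otimes> inv a \<otimes> inv b \<otimes> b \<otimes> a = b \<otimes> a" using a b by simp
  then show ?thesis using a b by (simp add: m_assoc)
qed

lemma uniq: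
  assumes "a \<in> A" "b \<in> B" "a' \<in> A" "b' \<in> B" "a \<otimes> b = a' \<otimes> b'"
  shows "a = a' \<and> b = b'"
proof -
  have c: "a \<in> carrier K" "b \<in> carrier K" "a' \<in> carrier K" "b' \<in> carrier K"
    using assms inA inB by auto
  have "inv a' \<otimes> a = inv a' \<otimes> (a \<otimes> b) \<otimes> inv b" using c by (simp add: m_assoc)
  also have "\<dots> = inv a' \<otimes> (a' \<otimes> b') \<otimes> inv b" using assms by simp
  also have "\<dots> = b' \<otimes> inv b" using c by (simp add: m_assoc[symmetric])
  finally have e: "inv a' \<otimes> a = b' \<otimes> inv b" .
  have "inv a' \<otimes> a \<in> A" using subgroup.m_closed[OF sA subgroup.m_inv_closed[OF sA assms(3)] assms(1)] .
  moreover have "b' \<otimes> inv b \<in> B" using subgroup.m_closed[OF sB assms(4) subgroup.m_inv_closed[OF sB assms(2)]] .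
  ultimately have "inv a' \<otimes> a = \<one>" using inter e by simp
  moreover have "a' \<otimes> (inv a' \<otimes> a) = a" using c by (simp add: m_assoc[symmetric])
  ultimately have "a = a'" using c by simp
  then show ?thesis using assms c l_cancel by metis
qed

lemma card_prod: "card ((\<lambda>(a,b). a \<otimes> b) ` (A \<times> B)) = card A * card B"
proof -
  have "inj_on (\<lambda>(a,b). a \<otimes> b) (A \<times> B)"
    using uniq unfolding inj_on_def by auto
  then show ?thesis by (simp add: card_image card_cartesian_product)
qed

lemma decomp_ex: assumes "k \<in> carrier K" shows "\<exists>a\<in>A. \<exists>b\<in>B. k = a \<otimes> b"
proof -
  have "(\<lambda>(a,b). a \<otimes> b) ` (A \<times> B) \<subseteq> carrier K" using inA inB by auto
  moreover have "card ((\<lambda>(a,b). a \<otimes> b) ` (A \<times> B)) = card (carrier K)"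
    using card_prod cardK by simp
  ultimately have "(\<lambda>(a,b). a \<otimes> b) ` (A \<times> B) = carrier K"
    using card_subset_eq finK by blast
  then show ?thesis using assms by force
qed

abbreviation "pA \<equiv> pa K A B"
abbreviation "pB \<equiv> pa K B A"

lemma pA_eq: assumes "a \<in> A" "b \<in> B" shows "pA (a \<otimes> b) = a"
  unfolding pa_def
proof (rule the_equality)
  show "a \<in> A \<and> (\<exists>b'\<in>B. a \<otimes> b = a \<otimes> b')" using assms by blast
  fix a' assume "a' \<in> A \<and> (\<exists>b'\<in>B. a \<otimes> b = a' \<otimes> b')"
  then show "a' = a" using uniq assms by metis
qed

lemma pB_eq: assumes "a \<in> A" "b \<in> B" shows "pB (a \<otimes> b) = b"
  unfolding pa_def
proof (rule the_equality)
  show "b \<in> B \<and> (\<exists>a'\<in>A. a \<otimes> b = b \<otimes> a')" using assms comm by blast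
  fix b' assume "b' \<in> B \<and> (\<exists>a'\<in>A. a \<otimes> b = b' \<otimes> a')"
  then obtain a' where "b' \<in> B" "a' \<in> A" "a \<otimes> b = a' \<otimes> b'" using comm by metis
  then show "b' = b" using uniq assms by blast
qed

lemma pAB_all: assumes "k \<in> carrier K" shows "pA k \<in> A \<and> pB k \<in> B \<and> pA k \<otimes> pB k = k"
proof -
  obtain a b where ab: "a \<in> A" "b \<in> B" "k = a \<otimes> b" using decomp_ex[OF assms] by blast
  have "pA k = a" using ab pA_eq by simp
  moreover have "pB k = b" using ab pB_eq by simp
  ultimately show ?thesis using ab by simp
qed

lemma pA_in: "k \<in> carrier K \<Longrightarrow> pA k \<in> A"
  using pAB_all by blast
lemma pB_in: "k \<in> carrier K \<Longrightarrow> pB k \<in> B"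
  using pAB_all by blast
lemma pAB: "k \<in> carrier K \<Longrightarrow> pA k \<otimes> pB k = k"
  using pAB_all by blast
lemma pA_c: "k \<in> carrier K \<Longrightarrow> pA k \<in> carrier K" using pA_in inA by blast
lemma pB_c: "k \<in> carrier K \<Longrightarrow> pB k \<in> carrier K" using pB_in inB by blast

lemma oneA: "\<one> \<in> A" using sA subgroup.one_closed by blast
lemma oneB: "\<one> \<in> B" using sB subgroup.one_closed by blast

lemma pA_A: "a \<in> A \<Longrightarrow> pA a = a" using pA_eq[OF _ oneB, of a] inA by simp
lemma pB_A: "a \<in> A \<Longrightarrow> pB a = \<one>" using pB_eq[OF _ oneB, of a] inA by simp
lemma pA_B: "b \<in> B \<Longrightarrow> pA b = \<one>" using pA_eq[OF oneA, of b] inB by simp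
lemma pB_B: "b \<in> B \<Longrightarrow> pB b = b" using pB_eq[OF oneA, of b] inB by simp

lemma pA_mult: assumes "x \<in> carrier K" "y \<in> carrier K" shows "pA (x \<otimes> y) = pA x \<otimes> pA y"
  and "pB (x \<otimes> y) = pB x \<otimes> pB y"
proof -
  have c: "pA x \<in> carrier K" "pB x \<in> carrier K" "pA y \<in> carrier K" "pB y \<in> carrier K"
    using assms pA_c pB_c by auto
  have cm: "pB x \<otimes> pA y = pA y \<otimes> pB x" using comm[OF pA_in[OF assms(2)] pB_in[OF assms(1)]] by simp
  have "x \<otimes> y = (pA x \<otimes> pB x) \<otimes> (pA y \<otimes> pB y)" using pAB[OF assms(1)] pAB[OF assms(2)] by simp
  also have "\<dots> = pA x \<otimes> (pB x \<otimes> pA y) \<otimes> pB y" using c by (simp only: m_assoc m_closed)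
  also have "\<dots> = pA x \<otimes> (pA y \<otimes> pB x) \<otimes> pB y" using cm by simp
  also have "\<dots> = (pA x \<otimes> pA y) \<otimes> (pB x \<otimes> pB y)" using c by (simp only: m_assoc m_closed)
  finally have e: "x \<otimes> y = (pA x \<otimes> pA y) \<otimes> (pB x \<otimes> pB y)" .
  have i: "pA x \<otimes> pA y \<in> A" "pB x \<otimes> pB y \<in> B"
    using subgroup.m_closed[OF sA pA_in[OF assms(1)] pA_in[OF assms(2)]]
      subgroup.m_closed[OF sB pB_in[OF assms(1)] pB_in[OF assms(2)]] by auto
  show "pA (x \<otimes> y) = pA x \<otimes> pA y" using e pA_eq[OF i] by simp
  show "pB (x \<otimes> y) = pB x \<otimes> pB y" using e pB_eq[OF i] by simp
qed

lemma pA_pow: "x \<in> carrier K \<Longrightarrow> pA (x [^] (n::nat)) = pA x [^] n"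
proof (induction n)
  case 0 then show ?case using pA_A[OF subgroup.one_closed[OF sA]] by simp
next
  case (Suc n) then show ?case by (simp add: pA_mult pA_c)
qed

lemma memA_iff: "x \<in> A \<longleftrightarrow> x \<in> carrier K \<and> pB x = \<one>"
proof
  assume "x \<in> A" then show "x \<in> carrier K \<and> pB x = \<one>" using pB_A inA by blast
next
  assume a: "x \<in> carrier K \<and> pB x = \<one>"
  then have "x = pA x" using pAB[of x] pA_c[of x] by simp
  then show "x \<in> A" using pA_in a by metis
qed

lemma hallB: assumes "H \<subseteq> carrier K" "\<And>h. h \<in> H \<Longrightarrow> h [^] card B = \<one>" "card B \<le> card H"
  shows "H = B"
proof -
  have "H \<subseteq> B"
  proof
    fix h assume h: "h \<in> H"
    have hc: "h \<in> carrier K" using h assms by blast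
    have "pA h [^] card B = pA (h [^] card B)" using pA_pow[OF hc] by simp
    also have "\<dots> = \<one>" using assms(2)[OF h] pA_A[OF subgroup.one_closed[OF sA]] by simp
    finally have "pA h [^] card B = \<one>" .
    moreover have "pA h [^] card A = \<one>" using powA pA_in hc by blast
    ultimately have "pA h = \<one>" using coprime_pow_one[OF pA_c[OF hc]] cop by blast
    then have "h = pB h" using pAB[OF hc] pB_c[OF hc] by simp
    then show "h \<in> B" using pB_in[OF hc] by simp
  qed
  then show ?thesis using assms(3) finB by (meson card_seteq)
qed

end

lemma (in dprod) hallA: assumes "H \<subseteq> carrier K" "\<And>h. h \<in> H \<Longrightarrow> h [^] card A = \<one>" "card A \<le> card H"
  shows "H = A"
  using dprod.hallB[OF swap] assms by blast

lemma hol_form: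
  assumes "f \<in> holomorph G"
  obtains \<alpha> g where "\<alpha> \<in> auto G" "g \<in> carrier G" "f = (\<lambda>x \<in> carrier G. \<alpha> x \<otimes>\<^bsub>G\<^esub> inv\<^bsub>G\<^esub> g)"
  using assms unfolding holomorph_def by blast

lemma auto_hom: "\<alpha> \<in> auto G \<Longrightarrow> \<alpha> \<in> hom G G" by (simp add: auto_def)
lemma auto_Bij: "\<alpha> \<in> auto G \<Longrightarrow> \<alpha> \<in> Bij (carrier G)" by (simp add: auto_def)
lemma auto_bij: "\<alpha> \<in> auto G \<Longrightarrow> bij_betw \<alpha> (carrier G) (carrier G)" by (simp add: auto_def Bij_def)
lemma auto_inj: "\<alpha> \<in> auto G \<Longrightarrow> inj_on \<alpha> (carrier G)" using auto_bij bij_betw_imp_inj_on by metis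
lemma auto_car: "\<alpha> \<in> auto G \<Longrightarrow> x \<in> carrier G \<Longrightarrow> \<alpha> x \<in> carrier G"
  by (rule hom_in_carrier[OF auto_hom])
lemma auto_mult: "\<alpha> \<in> auto G \<Longrightarrow> x \<in> carrier G \<Longrightarrow> y \<in> carrier G \<Longrightarrow> \<alpha> (x \<otimes>\<^bsub>G\<^esub> y) = \<alpha> x \<otimes>\<^bsub>G\<^esub> \<alpha> y"
  by (rule hom_mult[OF auto_hom])

lemma (in group) hol_Bij:
  assumes "f \<in> holomorph G" shows "f \<in> Bij (carrier G)"
proof -
  obtain \<alpha> g where a: "\<alpha> \<in> auto G" "g \<in> carrier G" and f: "f = (\<lambda>x \<in> carrier G. \<alpha> x \<otimes> inv g)"
    using hol_form[OF assms] by blast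
  have inj: "inj_on f (carrier G)"
  proof (rule inj_onI)
    fix x y assume xy: "x \<in> carrier G" "y \<in> carrier G" "f x = f y"
    then have "\<alpha> x \<otimes> inv g = \<alpha> y \<otimes> inv g" using f by simp
    then have "\<alpha> x = \<alpha> y" using xy a auto_car[of \<alpha> G] by simp
    then show "x = y" using auto_inj[OF a(1)] xy inj_onD by metis
  qed
  have "f ` carrier G = carrier G"
  proof
    show "f ` carrier G \<subseteq> carrier G" using f a auto_car[of \<alpha> G] by auto
    show "carrier G \<subseteq> f ` carrier G"
    proof
      fix y assume y: "y \<in> carrier G"
      have "y \<otimes> g \<in> carrier G" using y a(2) by simp
      then have "y \<otimes> g \<in> \<alpha> ` carrier G" using bij_betw_imp_surj_on[OF auto_bij[OF a(1)]] by simp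
      then obtain x where x: "x \<in> carrier G" "y \<otimes> g = \<alpha> x" by (rule imageE)
      have "f x = y \<otimes> g \<otimes> inv g" using f x by (simp del: r_inv)
      also have "\<dots> = y" using y a(2) by (simp add: m_assoc)
      finally show "y \<in> f ` carrier G" using x(1) by (metis imageI)
    qed
  qed
  then show ?thesis using inj f unfolding Bij_def bij_betw_def by simp
qed

lemma reg_inj:
  assumes "\<forall>x \<in> XX. \<forall>y \<in> XX. \<exists>!gg. gg \<in> S \<and> bb gg x = y" "XX \<noteq> {}"
    "\<And>g x. g \<in> S \<Longrightarrow> x \<in> XX \<Longrightarrow> bb g x \<in> XX"
  shows "inj_on bb S"
proof (rule inj_onI)
  fix u v assume uv: "u \<in> S" "v \<in> S" "bb u = bb v"
  obtain x where x: "x \<in> XX" using assms(2) by blast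
  have "bb u x \<in> XX" using assms(3) uv x by blast
  then have "\<exists>!gg. gg \<in> S \<and> bb gg x = bb u x" using assms(1) x by blast
  then show "u = v" using uv by metis
qed

lemma Bij_car:
  assumes "\<beta> \<in> hom K (BijGroup S)" "x \<in> carrier K"
  shows "\<beta> x \<in> Bij S"
proof -
  have "\<beta> x \<in> carrier (BijGroup S)" using hom_in_carrier[OF assms] .
  then show ?thesis by (simp add: BijGroup_def)
qed

lemma Bij_mult:
  assumes "\<beta> \<in> hom K (BijGroup S)" "x \<in> carrier K" "y \<in> carrier K" "s \<in> S"
  shows "\<beta> (x \<otimes>\<^bsub>K\<^esub> y) s = \<beta> x (\<beta> y s)"
proof -
  have b: "\<beta> x \<in> Bij S" "\<beta> y \<in> Bij S" using Bij_car[OF assms(1) assms(2)] Bij_car[OF assms(1) assms(3)] by auto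
  have "\<beta> (x \<otimes>\<^bsub>K\<^esub> y) = \<beta> x \<otimes>\<^bsub>BijGroup S\<^esub> \<beta> y" using hom_mult[OF assms(1-3)] .
  also have "\<dots> = compose S (\<beta> x) (\<beta> y)" using b by (simp add: BijGroup_def)
  finally show ?thesis using assms(4) by (simp add: compose_def)
qed

lemma Bij_one:
  assumes "group K" "\<beta> \<in> hom K (BijGroup S)"
  shows "\<beta> \<one>\<^bsub>K\<^esub> = (\<lambda>x\<in>S. x)"
proof -
  have "\<beta> \<one>\<^bsub>K\<^esub> = \<one>\<^bsub>BijGroup S\<^esub>" using hom_one[OF assms(2) assms(1) group_BijGroup] .
  then show ?thesis unfolding BijGroup_def by simp
qed

lemma Bij_in: "f \<in> Bij S \<Longrightarrow> s \<in> S \<Longrightarrow> f s \<in> S"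
  using funcset_mem[OF Bij_imp_funcset] .

locale bl = K: dprod K A B + G: dprod G C D
  for K :: "('a,'c) monoid_scheme" and A B and G :: "('b,'d) monoid_scheme" and C D +
  assumes cAC: "card A = card C" and cBD: "card B = card D"
begin

lemma swap: "bl K B A G D C"
  unfolding bl_def bl_axioms_def using K.swap G.swap cAC cBD by simp

abbreviation "pA \<equiv> pa K A B"
abbreviation "pB \<equiv> pa K B A"
abbreviation "pC \<equiv> pa G C D"
abbreviation "pD \<equiv> pa G D C"

lemma autC: assumes "\<alpha> \<in> auto G" "c \<in> C" shows "\<alpha> c \<in> C"
proof -
  have "\<alpha> ` C = C"
  proof (rule G.hallA)
    show "\<alpha> ` C \<subseteq> carrier G" using auto_car[OF assms(1)] G.inA by blast
    fix h assume "h \<in> \<alpha> ` C"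
    then obtain c where c: "c \<in> C" "h = \<alpha> c" by blast
    have "\<alpha> c [^]\<^bsub>G\<^esub> card C = \<alpha> (c [^]\<^bsub>G\<^esub> card C)"
      using hom_nat_pow[OF auto_hom[OF assms(1)] G.inA[OF c(1)] G.is_group G.is_group] by simp
    also have "\<dots> = \<one>\<^bsub>G\<^esub>" using G.powA[OF c(1)] hom_one[OF auto_hom[OF assms(1)] G.is_group G.is_group] by simp
    finally show "h [^]\<^bsub>G\<^esub> card C = \<one>\<^bsub>G\<^esub>" using c by simp
  next
    have "inj_on \<alpha> C" using auto_inj[OF assms(1)] G.A_sub inj_on_subset by blast
    then show "card C \<le> card (\<alpha> ` C)" by (simp add: card_image)
  qed
  then show ?thesis using assms(2) by blast
qed

end

lemma (in bl) autD: "\<alpha> \<in> auto G \<Longrightarrow> d \<in> D \<Longrightarrow> \<alpha> d \<in> D"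
  using bl.autC[OF swap] by blast

context bl begin

lemma auto_pC: assumes "\<alpha> \<in> auto G" "x \<in> carrier G" shows "pC (\<alpha> x) = \<alpha> (pC x)"
proof -
  have "\<alpha> x = \<alpha> (pC x \<otimes>\<^bsub>G\<^esub> pD x)" using G.pAB[OF assms(2)] by simp
  also have "\<dots> = \<alpha> (pC x) \<otimes>\<^bsub>G\<^esub> \<alpha> (pD x)" using auto_mult[OF assms(1) G.pA_c[OF assms(2)] G.pB_c[OF assms(2)]] .
  finally show ?thesis using G.pA_eq[OF autC[OF assms(1) G.pA_in[OF assms(2)]] autD[OF assms(1) G.pB_in[OF assms(2)]]] by simp
qed

lemma hol_pC: assumes "f \<in> holomorph G" "x \<in> carrier G" shows "pC (f x) = pC (f (pC x))"
proof -
  obtain \<alpha> g where a: "\<alpha> \<in> auto G" "g \<in> carrier G" and f: "f = (\<lambda>x \<in> carrier G. \<alpha> x \<otimes>\<^bsub>G\<^esub> inv\<^bsub>G\<^esub> g)"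
    using hol_form[OF assms(1)] by blast
  have cx: "pC x \<in> carrier G" using G.pA_c assms(2) by blast
  have ig: "inv\<^bsub>G\<^esub> g \<in> carrier G" using a(2) by simp
  have "pC (f x) = pC (\<alpha> x) \<otimes>\<^bsub>G\<^esub> pC (inv\<^bsub>G\<^esub> g)"
    using f assms(2) G.pA_mult(1)[OF auto_car[OF a(1) assms(2)] ig] by simp
  also have "\<dots> = \<alpha> (pC x) \<otimes>\<^bsub>G\<^esub> pC (inv\<^bsub>G\<^esub> g)" using auto_pC[OF a(1) assms(2)] by simp
  also have "\<dots> = pC (\<alpha> (pC x)) \<otimes>\<^bsub>G\<^esub> pC (inv\<^bsub>G\<^esub> g)"
    using auto_pC[OF a(1) cx] G.pA_A[OF G.pA_in[OF assms(2)]] by simp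
  also have "\<dots> = pC (f (pC x))"
    using f cx G.pA_mult(1)[OF auto_car[OF a(1) cx] ig] by simp
  finally show ?thesis .
qed

end

lemma (in bl) auto_pD: "\<alpha> \<in> auto G \<Longrightarrow> x \<in> carrier G \<Longrightarrow> pD (\<alpha> x) = \<alpha> (pD x)"
  using bl.auto_pC[OF swap] by blast
lemma (in bl) hol_pD: "f \<in> holomorph G \<Longrightarrow> x \<in> carrier G \<Longrightarrow> pD (f x) = pD (f (pD x))"
  using bl.hol_pC[OF swap] by blast

locale blr = bl K A B G C D
  for K :: "('a,'c) monoid_scheme" and A B and G :: "('b,'d) monoid_scheme" and C D +
  fixes \<beta> assumes reg: "\<beta> \<in> regular_embeddings K G"
begin

lemma swap_r: "blr K B A G D C \<beta>"
  unfolding blr_def blr_axioms_def using swap reg by simp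

lemma bhom: "\<beta> \<in> hom K (BijGroup (carrier G))" using reg unfolding regular_embeddings_def by blast
lemma bhol: "k \<in> carrier K \<Longrightarrow> \<beta> k \<in> holomorph G" using reg unfolding regular_embeddings_def by blast
lemma bBij: "k \<in> carrier K \<Longrightarrow> \<beta> k \<in> Bij (carrier G)" by (rule Bij_car[OF bhom])
lemma bcar: "k \<in> carrier K \<Longrightarrow> x \<in> carrier G \<Longrightarrow> \<beta> k x \<in> carrier G" by (rule Bij_in[OF bBij])
lemma bmult: "k \<in> carrier K \<Longrightarrow> k' \<in> carrier K \<Longrightarrow> x \<in> carrier G \<Longrightarrow> \<beta> (k \<otimes>\<^bsub>K\<^esub> k') x = \<beta> k (\<beta> k' x)"
  by (rule Bij_mult[OF bhom])
lemma bone: "x \<in> carrier G \<Longrightarrow> \<beta> \<one>\<^bsub>K\<^esub> x = x"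
  using Bij_one[OF K.is_group bhom] by simp
lemma breg: "x \<in> carrier G \<Longrightarrow> y \<in> carrier G \<Longrightarrow> \<exists>!k. k \<in> carrier K \<and> \<beta> k x = y"
  using reg unfolding regular_embeddings_def by blast
lemma bex: "x \<in> carrier G \<Longrightarrow> y \<in> carrier G \<Longrightarrow> \<exists>k\<in>carrier K. \<beta> k x = y"
  using breg by blast
lemma buniq: "k \<in> carrier K \<Longrightarrow> k' \<in> carrier K \<Longrightarrow> x \<in> carrier G \<Longrightarrow> \<beta> k x = \<beta> k' x \<Longrightarrow> k = k'"
proof -
  assume a: "k \<in> carrier K" "k' \<in> carrier K" "x \<in> carrier G" "\<beta> k x = \<beta> k' x"
  have "\<exists>!k''. k'' \<in> carrier K \<and> \<beta> k'' x = \<beta> k x" using breg[OF a(3) bcar[OF a(1) a(3)]] .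
  then show "k = k'" using a by metis
qed

lemma memC: "y \<in> C \<longleftrightarrow> y \<in> carrier G \<and> pD y = \<one>\<^bsub>G\<^esub>" by (rule G.memA_iff)
lemma memD: "y \<in> D \<longleftrightarrow> y \<in> carrier G \<and> pC y = \<one>\<^bsub>G\<^esub>" by (rule dprod.memA_iff[OF G.swap])

lemma pC_one: "pC \<one>\<^bsub>G\<^esub> = \<one>\<^bsub>G\<^esub>" using G.pA_A[OF G.oneA] .

lemma key1: assumes "k \<in> carrier K" "k' \<in> carrier K"
  shows "pC (\<beta> (k \<otimes>\<^bsub>K\<^esub> k') \<one>\<^bsub>G\<^esub>) = pC (\<beta> k (pC (\<beta> k' \<one>\<^bsub>G\<^esub>)))"
proof -
  have "\<beta> (k \<otimes>\<^bsub>K\<^esub> k') \<one>\<^bsub>G\<^esub> = \<beta> k (\<beta> k' \<one>\<^bsub>G\<^esub>)" using bmult assms by simp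
  then show ?thesis using hol_pC[OF bhol[OF assms(1)] bcar[OF assms(2)]] by simp
qed

lemma stabB: assumes "b \<in> B" shows "pC (\<beta> b \<one>\<^bsub>G\<^esub>) = \<one>\<^bsub>G\<^esub>"
proof -
  define S where "S = {k \<in> carrier K. pC (\<beta> k \<one>\<^bsub>G\<^esub>) = \<one>\<^bsub>G\<^esub>}"
  have Ssub: "S \<subseteq> carrier K" unfolding S_def by blast
  have one1: "\<one>\<^bsub>K\<^esub> \<in> S" unfolding S_def using bone pC_one by simp
  have sgS: "subgroup S K"
  proof (rule K.subgroupI)
    show "S \<subseteq> carrier K" by (rule Ssub)
    show "S \<noteq> {}" using one1 by blast
  next
    fix a assume a: "a \<in> S"
    then have ac: "a \<in> carrier K" and pa1: "pC (\<beta> a \<one>\<^bsub>G\<^esub>) = \<one>\<^bsub>G\<^esub>" unfolding S_def by auto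
    have iac: "inv\<^bsub>K\<^esub> a \<in> carrier K" using ac by simp
    have "pC (\<beta> (inv\<^bsub>K\<^esub> a) \<one>\<^bsub>G\<^esub>) = pC (\<beta> (inv\<^bsub>K\<^esub> a) (pC (\<beta> a \<one>\<^bsub>G\<^esub>)))" using pa1 by simp
    also have "\<dots> = pC (\<beta> (inv\<^bsub>K\<^esub> a \<otimes>\<^bsub>K\<^esub> a) \<one>\<^bsub>G\<^esub>)" using key1[OF iac ac] by simp
    also have "\<dots> = \<one>\<^bsub>G\<^esub>" using ac bone pC_one by simp
    finally show "inv\<^bsub>K\<^esub> a \<in> S" unfolding S_def using iac by simp
  next
    fix a b assume ab: "a \<in> S" "b \<in> S"
    then have c: "a \<in> carrier K" "b \<in> carrier K" and p: "pC (\<beta> a \<one>\<^bsub>G\<^esub>) = \<one>\<^bsub>G\<^esub>" "pC (\<beta> b \<one>\<^bsub>G\<^esub>) = \<one>\<^bsub>G\<^esub>"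
      unfolding S_def by auto
    have "pC (\<beta> (a \<otimes>\<^bsub>K\<^esub> b) \<one>\<^bsub>G\<^esub>) = \<one>\<^bsub>G\<^esub>" using key1[OF c] p by simp
    then show "a \<otimes>\<^bsub>K\<^esub> b \<in> S" unfolding S_def using c by simp
  qed
  have "bij_betw (\<lambda>k. \<beta> k \<one>\<^bsub>G\<^esub>) S D"
  proof (rule bij_betw_imageI)
    show "inj_on (\<lambda>k. \<beta> k \<one>\<^bsub>G\<^esub>) S"
    proof (rule inj_onI)
      fix u v assume "u \<in> S" "v \<in> S" "\<beta> u \<one>\<^bsub>G\<^esub> = \<beta> v \<one>\<^bsub>G\<^esub>"
      then show "u = v" using buniq Ssub by blast
    qed
    show "(\<lambda>k. \<beta> k \<one>\<^bsub>G\<^esub>) ` S = D"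
    proof
      show "(\<lambda>k. \<beta> k \<one>\<^bsub>G\<^esub>) ` S \<subseteq> D"
      proof
        fix y assume "y \<in> (\<lambda>k. \<beta> k \<one>\<^bsub>G\<^esub>) ` S"
        then obtain k where k: "k \<in> S" "y = \<beta> k \<one>\<^bsub>G\<^esub>" by blast
        then have "k \<in> carrier K" "pC y = \<one>\<^bsub>G\<^esub>" unfolding S_def by auto
        then show "y \<in> D" using memD bcar k(2) by simp
      qed
      show "D \<subseteq> (\<lambda>k. \<beta> k \<one>\<^bsub>G\<^esub>) ` S"
      proof
        fix y assume y: "y \<in> D"
        then have yc: "y \<in> carrier G" "pC y = \<one>\<^bsub>G\<^esub>" using memD by auto
        obtain k where k: "k \<in> carrier K" "\<beta> k \<one>\<^bsub>G\<^esub> = y" using bex[OF G.one_closed yc(1)] by blast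
        then have "k \<in> S" unfolding S_def using yc by simp
        then show "y \<in> (\<lambda>k. \<beta> k \<one>\<^bsub>G\<^esub>) ` S" using k by force
      qed
    qed
  qed
  then have cS: "card S = card B" using bij_betw_same_card cBD by metis
  have finS: "finite S" using Ssub K.finK finite_subset by blast
  have "S = B"
  proof (rule K.hallB)
    show "S \<subseteq> carrier K" by (rule Ssub)
    fix h assume "h \<in> S"
    then show "h [^]\<^bsub>K\<^esub> card B = \<one>\<^bsub>K\<^esub>" using K.subgroup_pow_card[OF sgS finS] cS by simp
  next
    show "card B \<le> card S" using cS by simp
  qed
  then show ?thesis using assms unfolding S_def by blast
qed

lemma trivB: assumes "b \<in> B" "x \<in> carrier G" shows "pC (\<beta> b x) = pC x"
proof -
  have bc: "b \<in> carrier K" using K.inB assms(1) by blast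
  have cx: "pC x \<in> carrier G" using G.pA_c assms(2) by blast
  obtain k where k: "k \<in> carrier K" "\<beta> k \<one>\<^bsub>G\<^esub> = pC x" using bex[OF G.one_closed cx] by blast
  define b' where "b' = inv\<^bsub>K\<^esub> k \<otimes>\<^bsub>K\<^esub> b \<otimes>\<^bsub>K\<^esub> k"
  have b'B: "b' \<in> B" using K.nB[of "inv\<^bsub>K\<^esub> k" b] k(1) assms(1) unfolding b'_def by simp
  have b'c: "b' \<in> carrier K" using K.inB b'B by blast
  have bk: "b \<otimes>\<^bsub>K\<^esub> k = k \<otimes>\<^bsub>K\<^esub> b'"
    unfolding b'_def using k(1) bc by (simp add: K.m_assoc[symmetric])
  have "pC (\<beta> b x) = pC (\<beta> b (pC x))" using hol_pC[OF bhol[OF bc] assms(2)] .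
  also have "\<dots> = pC (\<beta> b (\<beta> k \<one>\<^bsub>G\<^esub>))" using k by simp
  also have "\<dots> = pC (\<beta> (b \<otimes>\<^bsub>K\<^esub> k) \<one>\<^bsub>G\<^esub>)" using bmult[OF bc k(1) G.one_closed] by simp
  also have "\<dots> = pC (\<beta> (k \<otimes>\<^bsub>K\<^esub> b') \<one>\<^bsub>G\<^esub>)" using bk by simp
  also have "\<dots> = pC (\<beta> k (pC (\<beta> b' \<one>\<^bsub>G\<^esub>)))" using key1[OF k(1) b'c] .
  also have "\<dots> = pC (\<beta> k \<one>\<^bsub>G\<^esub>)" using stabB[OF b'B] by simp
  also have "\<dots> = pC x" using k G.pA_A[OF G.pA_in[OF assms(2)]] by simp
  finally show ?thesis .
qed

end

lemma (in blr) trivA: "a \<in> A \<Longrightarrow> x \<in> carrier G \<Longrightarrow> pD (\<beta> a x) = pD x"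
  using blr.trivB[OF swap_r] by blast

context blr begin

lemma closC: assumes "a \<in> A" "c \<in> C" shows "\<beta> a c \<in> C"
proof -
  have ac: "a \<in> carrier K" using K.inA assms(1) by blast
  have cc: "c \<in> carrier G" using G.inA assms(2) by blast
  have "pD (\<beta> a c) = pD c" using trivA[OF assms(1) cc] .
  also have "\<dots> = \<one>\<^bsub>G\<^esub>" using G.pB_A[OF assms(2)] .
  finally show ?thesis using memC bcar[OF ac cc] by simp
qed

end

lemma (in blr) closD: "b \<in> B \<Longrightarrow> d \<in> D \<Longrightarrow> \<beta> b d \<in> D"
  using blr.closC[OF swap_r] by blast

context blr begin

lemma decomp: assumes "k \<in> carrier K" "x \<in> carrier G"
  shows "\<beta> k x = \<beta> (pA k) (pC x) \<otimes>\<^bsub>G\<^esub> \<beta> (pB k) (pD x)"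
proof -
  have a: "pA k \<in> A" and b: "pB k \<in> B" using K.pA_in K.pB_in assms(1) by auto
  have ac: "pA k \<in> carrier K" and bc: "pB k \<in> carrier K" using a b K.inA K.inB by auto
  have cx: "pC x \<in> C" and dx: "pD x \<in> D" using G.pA_in G.pB_in assms(2) by auto
  have cxc: "pC x \<in> carrier G" and dxc: "pD x \<in> carrier G" using cx dx G.inA G.inB by auto
  define y where "y = \<beta> (pB k) x"
  have yc: "y \<in> carrier G" unfolding y_def using bcar[OF bc assms(2)] .
  have "\<beta> k x = \<beta> (pA k \<otimes>\<^bsub>K\<^esub> pB k) x" using K.pAB[OF assms(1)] by simp
  also have "\<dots> = \<beta> (pA k) y" unfolding y_def using bmult[OF ac bc assms(2)] .
  finally have e1: "\<beta> k x = \<beta> (pA k) y" .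
  have pcy: "pC y = pC x" unfolding y_def using trivB[OF b assms(2)] .
  have "pD y = pD (\<beta> (pB k) (pD x))" unfolding y_def using hol_pD[OF bhol[OF bc] assms(2)] .
  also have "\<dots> = \<beta> (pB k) (pD x)" using G.pB_B[OF closD[OF b dx]] .
  finally have pdy: "pD y = \<beta> (pB k) (pD x)" .
  have "\<beta> (pA k) y = pC (\<beta> (pA k) y) \<otimes>\<^bsub>G\<^esub> pD (\<beta> (pA k) y)" using G.pAB[OF bcar[OF ac yc]] by simp
  also have "pC (\<beta> (pA k) y) = \<beta> (pA k) (pC x)"
  proof -
    have "pC (\<beta> (pA k) y) = pC (\<beta> (pA k) (pC y))" using hol_pC[OF bhol[OF ac] yc] .
    also have "\<dots> = pC (\<beta> (pA k) (pC x))" using pcy by simp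
    also have "\<dots> = \<beta> (pA k) (pC x)" using G.pA_A[OF closC[OF a cx]] .
    finally show ?thesis .
  qed
  also have "pD (\<beta> (pA k) y) = \<beta> (pB k) (pD x)" using trivA[OF a yc] pdy by simp
  finally show ?thesis using e1 by simp
qed

end

lemma re_facts:
  assumes "\<beta> \<in> regular_embeddings K G"
  shows "\<beta> \<in> extensional (carrier K)" "\<beta> \<in> hom K (BijGroup (carrier G))" "inj_on \<beta> (carrier K)"
    "\<And>k. k \<in> carrier K \<Longrightarrow> \<beta> k \<in> holomorph G"
    "\<And>x y. x \<in> carrier G \<Longrightarrow> y \<in> carrier G \<Longrightarrow> \<exists>!\<gamma>. \<gamma> \<in> carrier K \<and> \<beta> \<gamma> x = y"
  using assms unfolding regular_embeddings_def by blast+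

definition comb :: "('b, 'd) monoid_scheme \<Rightarrow> 'b set \<Rightarrow> 'b set \<Rightarrow> ('b \<Rightarrow> 'b) \<Rightarrow> ('b \<Rightarrow> 'b) \<Rightarrow> 'b \<Rightarrow> 'b" where
  "comb G C D \<alpha>1 \<alpha>2 = (\<lambda>x\<in>carrier G. \<alpha>1 (pa G C D x) \<otimes>\<^bsub>G\<^esub> \<alpha>2 (pa G D C x))"

context bl begin

lemma grpKA: "group (K\<lparr>carrier := A\<rparr>)" using K.subgroup_imp_group[OF K.sA] .
lemma grpGC: "group (G\<lparr>carrier := C\<rparr>)" using G.subgroup_imp_group[OF G.sA] .

lemma invC: "c \<in> C \<Longrightarrow> inv\<^bsub>G\<lparr>carrier := C\<rparr>\<^esub> c = inv\<^bsub>G\<^esub> c"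
  using G.m_inv_consistent[OF G.sA] by blast

lemma aC_in: "\<alpha> \<in> auto (G\<lparr>carrier := C\<rparr>) \<Longrightarrow> c \<in> C \<Longrightarrow> \<alpha> c \<in> C"
  using auto_car[of \<alpha> "G\<lparr>carrier := C\<rparr>" c] by simp
lemma aC_mult: "\<alpha> \<in> auto (G\<lparr>carrier := C\<rparr>) \<Longrightarrow> x \<in> C \<Longrightarrow> y \<in> C \<Longrightarrow> \<alpha> (x \<otimes>\<^bsub>G\<^esub> y) = \<alpha> x \<otimes>\<^bsub>G\<^esub> \<alpha> y"
  using auto_mult[of \<alpha> "G\<lparr>carrier := C\<rparr>" x y] by simp
lemma aC_inj: "\<alpha> \<in> auto (G\<lparr>carrier := C\<rparr>) \<Longrightarrow> inj_on \<alpha> C"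
  using auto_inj[of \<alpha> "G\<lparr>carrier := C\<rparr>"] by simp
lemma aC_one: "\<alpha> \<in> auto (G\<lparr>carrier := C\<rparr>) \<Longrightarrow> \<alpha> \<one>\<^bsub>G\<^esub> = \<one>\<^bsub>G\<^esub>"
  using hom_one[OF auto_hom grpGC grpGC, of \<alpha>] by simp

lemma auto_restrC: assumes "\<alpha> \<in> auto G" shows "(\<lambda>x\<in>C. \<alpha> x) \<in> auto (G\<lparr>carrier := C\<rparr>)"
proof -
  have h: "(\<lambda>x\<in>C. \<alpha> x) \<in> hom (G\<lparr>carrier := C\<rparr>) (G\<lparr>carrier := C\<rparr>)"
    unfolding hom_def using autC[OF assms] auto_mult[OF assms] G.inA
      subgroup.m_closed[OF G.sA] by auto
  have inj: "inj_on (\<lambda>x\<in>C. \<alpha> x) C"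
    using inj_on_subset[OF auto_inj[OF assms] G.A_sub] unfolding inj_on_def by simp
  have im: "(\<lambda>x\<in>C. \<alpha> x) ` C \<subseteq> C" using autC[OF assms] by auto
  have "(\<lambda>x\<in>C. \<alpha> x) ` C = C" using endo_inj_surj[OF G.finA im inj] .
  then have "bij_betw (\<lambda>x\<in>C. \<alpha> x) C C" using inj unfolding bij_betw_def by simp
  then show ?thesis using h unfolding auto_def Bij_def by simp
qed

lemma comb_auto:
  assumes a1: "\<alpha>1 \<in> auto (G\<lparr>carrier := C\<rparr>)" and a2: "\<alpha>2 \<in> auto (G\<lparr>carrier := D\<rparr>)"
  shows "comb G C D \<alpha>1 \<alpha>2 \<in> auto G"
    and "\<And>x. x \<in> carrier G \<Longrightarrow> pC (comb G C D \<alpha>1 \<alpha>2 x) = \<alpha>1 (pC x)"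
    and "\<And>x. x \<in> carrier G \<Longrightarrow> pD (comb G C D \<alpha>1 \<alpha>2 x) = \<alpha>2 (pD x)"
proof -
  let ?f = "comb G C D \<alpha>1 \<alpha>2"
  have in1: "\<And>x. x \<in> carrier G \<Longrightarrow> \<alpha>1 (pC x) \<in> C" using aC_in[OF a1] G.pA_in by blast
  have in2: "\<And>x. x \<in> carrier G \<Longrightarrow> \<alpha>2 (pD x) \<in> D" using bl.aC_in[OF swap a2] G.pB_in by blast
  have fx: "\<And>x. x \<in> carrier G \<Longrightarrow> ?f x = \<alpha>1 (pC x) \<otimes>\<^bsub>G\<^esub> \<alpha>2 (pD x)" unfolding comb_def by simp
  show pc: "\<And>x. x \<in> carrier G \<Longrightarrow> pC (?f x) = \<alpha>1 (pC x)" using fx in1 in2 G.pA_eq by simp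
  show pd: "\<And>x. x \<in> carrier G \<Longrightarrow> pD (?f x) = \<alpha>2 (pD x)" using fx in1 in2 G.pB_eq by simp
  have fc: "\<And>x. x \<in> carrier G \<Longrightarrow> ?f x \<in> carrier G" using fx in1 in2 G.inA G.inB by simp
  have hom: "?f \<in> hom G G"
  proof -
    have "?f (x \<otimes>\<^bsub>G\<^esub> y) = ?f x \<otimes>\<^bsub>G\<^esub> ?f y" if xy: "x \<in> carrier G" "y \<in> carrier G" for x y
    proof -
      have c: "\<alpha>1 (pC x) \<in> carrier G" "\<alpha>1 (pC y) \<in> carrier G" "\<alpha>2 (pD x) \<in> carrier G" "\<alpha>2 (pD y) \<in> carrier G"
        using in1 in2 xy G.inA G.inB by auto
      have cm: "\<alpha>2 (pD x) \<otimes>\<^bsub>G\<^esub> \<alpha>1 (pC y) = \<alpha>1 (pC y) \<otimes>\<^bsub>G\<^esub> \<alpha>2 (pD x)"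
        using G.comm[OF in1[OF xy(2)] in2[OF xy(1)]] by simp
      have "?f (x \<otimes>\<^bsub>G\<^esub> y) = \<alpha>1 (pC x \<otimes>\<^bsub>G\<^esub> pC y) \<otimes>\<^bsub>G\<^esub> \<alpha>2 (pD x \<otimes>\<^bsub>G\<^esub> pD y)"
        using fx[of "x \<otimes>\<^bsub>G\<^esub> y"] xy G.pA_mult by simp
      also have "\<dots> = (\<alpha>1 (pC x) \<otimes>\<^bsub>G\<^esub> \<alpha>1 (pC y)) \<otimes>\<^bsub>G\<^esub> (\<alpha>2 (pD x) \<otimes>\<^bsub>G\<^esub> \<alpha>2 (pD y))"
        using aC_mult[OF a1 G.pA_in[OF xy(1)] G.pA_in[OF xy(2)]]
          bl.aC_mult[OF swap a2 G.pB_in[OF xy(1)] G.pB_in[OF xy(2)]] by simp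
      also have "\<dots> = \<alpha>1 (pC x) \<otimes>\<^bsub>G\<^esub> (\<alpha>1 (pC y) \<otimes>\<^bsub>G\<^esub> \<alpha>2 (pD x)) \<otimes>\<^bsub>G\<^esub> \<alpha>2 (pD y)"
        using c by (simp only: G.m_assoc G.m_closed)
      also have "\<dots> = \<alpha>1 (pC x) \<otimes>\<^bsub>G\<^esub> (\<alpha>2 (pD x) \<otimes>\<^bsub>G\<^esub> \<alpha>1 (pC y)) \<otimes>\<^bsub>G\<^esub> \<alpha>2 (pD y)"
        using cm by simp
      also have "\<dots> = (\<alpha>1 (pC x) \<otimes>\<^bsub>G\<^esub> \<alpha>2 (pD x)) \<otimes>\<^bsub>G\<^esub> (\<alpha>1 (pC y) \<otimes>\<^bsub>G\<^esub> \<alpha>2 (pD y))"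
        using c by (simp only: G.m_assoc G.m_closed)
      also have "\<dots> = ?f x \<otimes>\<^bsub>G\<^esub> ?f y" using fx xy by simp
      finally show ?thesis .
    qed
    then show ?thesis unfolding hom_def using fc by auto
  qed
  have inj: "inj_on ?f (carrier G)"
  proof (rule inj_onI)
    fix x y assume xy: "x \<in> carrier G" "y \<in> carrier G" "?f x = ?f y"
    have "\<alpha>1 (pC x) = \<alpha>1 (pC y)" using pc[OF xy(1)] pc[OF xy(2)] xy(3) by simp
    then have "pC x = pC y" using inj_onD[OF aC_inj[OF a1]] G.pA_in xy by blast
    moreover have "\<alpha>2 (pD x) = \<alpha>2 (pD y)" using pd[OF xy(1)] pd[OF xy(2)] xy(3) by simp
    then have "pD x = pD y" using inj_onD[OF bl.aC_inj[OF swap a2]] G.pB_in xy by blast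
    ultimately show "x = y" using G.pAB xy by metis
  qed
  have "?f ` carrier G \<subseteq> carrier G" using fc by blast
  then have "?f ` carrier G = carrier G" using endo_inj_surj[OF G.finK _ inj] by blast
  then have "bij_betw ?f (carrier G) (carrier G)" using inj unfolding bij_betw_def by simp
  moreover have "?f \<in> extensional (carrier G)" unfolding comb_def by simp
  ultimately show "?f \<in> auto G" using hom unfolding auto_def Bij_def by simp
qed

context
  fixes \<beta>1 assumes e: "\<beta>1 \<in> regular_embeddings (K\<lparr>carrier := A\<rparr>) (G\<lparr>carrier := C\<rparr>)"
begin

lemma eBij: "a \<in> A \<Longrightarrow> \<beta>1 a \<in> Bij C"
  using Bij_car[OF re_facts(2)[OF e], of a] by simp
lemma ein: "a \<in> A \<Longrightarrow> c \<in> C \<Longrightarrow> \<beta>1 a c \<in> C"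
  using Bij_in[OF eBij] by blast
lemma emult: "a \<in> A \<Longrightarrow> a' \<in> A \<Longrightarrow> c \<in> C \<Longrightarrow> \<beta>1 (a \<otimes>\<^bsub>K\<^esub> a') c = \<beta>1 a (\<beta>1 a' c)"
  using Bij_mult[OF re_facts(2)[OF e], of a a' c] by simp
lemma eone: "c \<in> C \<Longrightarrow> \<beta>1 \<one>\<^bsub>K\<^esub> c = c"
  using Bij_one[OF grpKA re_facts(2)[OF e]] by simp
lemma eext: "\<beta>1 \<in> extensional A" using re_facts(1)[OF e] by simp
lemma eext2: "a \<in> A \<Longrightarrow> \<beta>1 a \<in> extensional C" using eBij Bij_imp_extensional by blast
lemma ereg: "c \<in> C \<Longrightarrow> c' \<in> C \<Longrightarrow> \<exists>!a. a \<in> A \<and> \<beta>1 a c = c'"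
  using re_facts(5)[OF e, of c c'] by simp
lemma ehol: assumes "a \<in> A"
  obtains \<alpha> g where "\<alpha> \<in> auto (G\<lparr>carrier := C\<rparr>)" "g \<in> C" "\<beta>1 a = (\<lambda>x\<in>C. \<alpha> x \<otimes>\<^bsub>G\<^esub> inv\<^bsub>G\<^esub> g)"
proof -
  have "\<beta>1 a \<in> holomorph (G\<lparr>carrier := C\<rparr>)" using re_facts(4)[OF e, of a] assms by simp
  then obtain \<alpha> g where "\<alpha> \<in> auto (G\<lparr>carrier := C\<rparr>)" "g \<in> C"
      "\<beta>1 a = (\<lambda>x\<in>C. \<alpha> x \<otimes>\<^bsub>G\<^esub> inv\<^bsub>G\<lparr>carrier := C\<rparr>\<^esub> g)"
    using hol_form[of "\<beta>1 a" "G\<lparr>carrier := C\<rparr>"] by auto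
  then show ?thesis using that invC by simp
qed

end

end

definition phi :: "'a set \<Rightarrow> 'b set \<Rightarrow> ('a \<Rightarrow> 'b \<Rightarrow> 'b) \<Rightarrow> ('a \<Rightarrow> 'b \<Rightarrow> 'b)" where
  "phi A C \<beta> = (\<lambda>a\<in>A. \<lambda>x\<in>C. \<beta> a x)"

context blr begin

lemma phiBij: assumes "a \<in> A" shows "(\<lambda>x\<in>C. \<beta> a x) \<in> Bij C"
proof -
  have ac: "a \<in> carrier K" using K.inA assms by blast
  have inj0: "inj_on (\<beta> a) C"
    using inj_on_subset[OF bij_betw_imp_inj_on[OF conjunct2[OF bBij[OF ac, unfolded Bij_def Int_iff mem_Collect_eq]]] G.A_sub] .
  have im: "\<beta> a ` C \<subseteq> C" using closC[OF assms] by blast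
  have "\<beta> a ` C = C" using endo_inj_surj[OF G.finA im inj0] .
  then have "bij_betw (\<beta> a) C C" using inj0 unfolding bij_betw_def by simp
  then have "bij_betw (\<lambda>x\<in>C. \<beta> a x) C C" using bij_betw_cong[of C "\<lambda>x\<in>C. \<beta> a x" "\<beta> a"] by simp
  then show ?thesis unfolding Bij_def by simp
qed

lemma phi_re: "phi A C \<beta> \<in> regular_embeddings (K\<lparr>carrier := A\<rparr>) (G\<lparr>carrier := C\<rparr>)"
proof -
  let ?p = "phi A C \<beta>"
  have pa: "\<And>a. a \<in> A \<Longrightarrow> ?p a = (\<lambda>x\<in>C. \<beta> a x)" unfolding phi_def by simp
  have extp: "?p \<in> extensional (carrier (K\<lparr>carrier := A\<rparr>))" unfolding phi_def by simp
  have hom: "?p \<in> hom (K\<lparr>carrier := A\<rparr>) (BijGroup (carrier (G\<lparr>carrier := C\<rparr>)))"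
  proof -
    have "?p \<in> A \<rightarrow> Bij C" using pa phiBij by simp
    moreover have "?p (a \<otimes>\<^bsub>K\<^esub> a') = compose C (?p a) (?p a')" if aa: "a \<in> A" "a' \<in> A" for a a'
    proof -
      have aa': "a \<otimes>\<^bsub>K\<^esub> a' \<in> A" using subgroup.m_closed[OF K.sA aa] .
      have ac: "a \<in> carrier K" "a' \<in> carrier K" using aa K.inA by auto
      show ?thesis
      proof (rule ext)
        fix x show "?p (a \<otimes>\<^bsub>K\<^esub> a') x = compose C (?p a) (?p a') x"
        proof (cases "x \<in> C")
          case True
          then have xc: "x \<in> carrier G" using G.inA by blast
          show ?thesis using True pa[OF aa'] pa[OF aa(1)] pa[OF aa(2)] closC[OF aa(2) True]
              bmult[OF ac xc] by (simp add: compose_def)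
        next
          case False
          then show ?thesis using pa[OF aa'] by (simp add: compose_def)
        qed
      qed
    qed
    ultimately show ?thesis unfolding hom_def BijGroup_def using pa phiBij by auto
  qed
  have maps: "\<And>a c. a \<in> A \<Longrightarrow> c \<in> C \<Longrightarrow> ?p a c \<in> C" using pa closC by simp
  have regc: "\<forall>x\<in>C. \<forall>y\<in>C. \<exists>!a. a \<in> A \<and> ?p a x = y"
  proof (intro ballI)
    fix c c' assume cc: "c \<in> C" "c' \<in> C"
    have ccar: "c \<in> carrier G" "c' \<in> carrier G" using cc G.inA by auto
    obtain k where k: "k \<in> carrier K" "\<beta> k c = c'" using bex[OF ccar] by blast
    have pac: "pA k \<in> A" "pB k \<in> B" using K.pA_in K.pB_in k(1) by auto
    have "c' = \<beta> (pA k) (pC c) \<otimes>\<^bsub>G\<^esub> \<beta> (pB k) (pD c)" using decomp[OF k(1) ccar(1)] k(2) by simp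
    also have "\<dots> = \<beta> (pA k) c \<otimes>\<^bsub>G\<^esub> \<beta> (pB k) \<one>\<^bsub>G\<^esub>" using G.pA_A[OF cc(1)] G.pB_A[OF cc(1)] by simp
    finally have e: "c' \<otimes>\<^bsub>G\<^esub> \<one>\<^bsub>G\<^esub> = \<beta> (pA k) c \<otimes>\<^bsub>G\<^esub> \<beta> (pB k) \<one>\<^bsub>G\<^esub>" using ccar by simp
    have "c' = \<beta> (pA k) c" using G.uniq[OF cc(2) G.oneB closC[OF pac(1) cc(1)] closD[OF pac(2) G.oneB] e] by simp
    then have ex: "pA k \<in> A \<and> ?p (pA k) c = c'" using pa pac cc by simp
    show "\<exists>!a. a \<in> A \<and> ?p a c = c'"
    proof (rule ex1I[of _ "pA k"])
      show "pA k \<in> A \<and> ?p (pA k) c = c'" by (rule ex)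
      fix a assume a: "a \<in> A \<and> ?p a c = c'"
      have "\<beta> a c = ?p a c" using pa[of a] a cc by simp
      also have "\<dots> = c'" using a by simp
      also have "\<dots> = ?p (pA k) c" using ex by simp
      also have "\<dots> = \<beta> (pA k) c" using pa[of "pA k"] pac cc by simp
      finally have "\<beta> a c = \<beta> (pA k) c" .
      then show "a = pA k" using buniq[of a "pA k" c] a pac K.inA ccar by blast
    qed
  qed
  have inj: "inj_on ?p A"
    using reg_inj[of C A ?p] regc maps G.oneA by blast
  have hol: "?p a \<in> holomorph (G\<lparr>carrier := C\<rparr>)" if a: "a \<in> A" for a
  proof -
    have ac: "a \<in> carrier K" using a K.inA by blast
    obtain \<alpha> g where ag: "\<alpha> \<in> auto G" "g \<in> carrier G" and f: "\<beta> a = (\<lambda>x \<in> carrier G. \<alpha> x \<otimes>\<^bsub>G\<^esub> inv\<^bsub>G\<^esub> g)"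
      using hol_form[OF bhol[OF ac]] by blast
    have "\<beta> a \<one>\<^bsub>G\<^esub> = \<alpha> \<one>\<^bsub>G\<^esub> \<otimes>\<^bsub>G\<^esub> inv\<^bsub>G\<^esub> g" using f by simp
    also have "\<dots> = inv\<^bsub>G\<^esub> g" using hom_one[OF auto_hom[OF ag(1)] G.is_group G.is_group] ag(2) by simp
    finally have "inv\<^bsub>G\<^esub> g \<in> C" using closC[OF a G.oneA] by simp
    then have gC: "g \<in> C" using subgroup.m_inv_closed[OF G.sA] ag(2) by fastforce
    have "?p a = (\<lambda>x\<in>C. (\<lambda>x\<in>C. \<alpha> x) x \<otimes>\<^bsub>G\<lparr>carrier := C\<rparr>\<^esub> inv\<^bsub>G\<lparr>carrier := C\<rparr>\<^esub> g)"
    proof (rule ext)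
      fix x show "?p a x = (\<lambda>x\<in>C. (\<lambda>x\<in>C. \<alpha> x) x \<otimes>\<^bsub>G\<lparr>carrier := C\<rparr>\<^esub> inv\<^bsub>G\<lparr>carrier := C\<rparr>\<^esub> g) x"
        using pa[OF a] f invC[OF gC] G.inA by auto
    qed
    then have eq': "?p a = (\<lambda>x\<in>carrier (G\<lparr>carrier := C\<rparr>). (\<lambda>x\<in>C. \<alpha> x) x \<otimes>\<^bsub>G\<lparr>carrier := C\<rparr>\<^esub> inv\<^bsub>G\<lparr>carrier := C\<rparr>\<^esub> g)"
      by simp
    have gC': "g \<in> carrier (G\<lparr>carrier := C\<rparr>)" using gC by simp
    show ?thesis unfolding holomorph_def using auto_restrC[OF ag(1)] gC' eq' by blast
  qed
  show ?thesis unfolding regular_embeddings_def using extp hom inj hol regc by auto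
qed

lemma phi_app: "a \<in> A \<Longrightarrow> c \<in> C \<Longrightarrow> phi A C \<beta> a c = \<beta> a c"
  unfolding phi_def by simp

end

definition psi where
  "psi K A B G C D \<beta>1 \<beta>2 = (\<lambda>k\<in>carrier K. \<lambda>x\<in>carrier G.
     \<beta>1 (pa K A B k) (pa G C D x) \<otimes>\<^bsub>G\<^esub> \<beta>2 (pa K B A k) (pa G D C x))"

context bl begin

context
  fixes \<beta>1 \<beta>2
  assumes e1: "\<beta>1 \<in> regular_embeddings (K\<lparr>carrier := A\<rparr>) (G\<lparr>carrier := C\<rparr>)"
    and e2: "\<beta>2 \<in> regular_embeddings (K\<lparr>carrier := B\<rparr>) (G\<lparr>carrier := D\<rparr>)"
begin

abbreviation "Ps \<equiv> psi K A B G C D \<beta>1 \<beta>2"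

lemma psi_app: "k \<in> carrier K \<Longrightarrow> x \<in> carrier G \<Longrightarrow> Ps k x = \<beta>1 (pA k) (pC x) \<otimes>\<^bsub>G\<^esub> \<beta>2 (pB k) (pD x)"
  unfolding psi_def by simp

lemma i1: "k \<in> carrier K \<Longrightarrow> x \<in> carrier G \<Longrightarrow> \<beta>1 (pA k) (pC x) \<in> C"
  using ein[OF e1] K.pA_in G.pA_in by blast
lemma i2: "k \<in> carrier K \<Longrightarrow> x \<in> carrier G \<Longrightarrow> \<beta>2 (pB k) (pD x) \<in> D"
  using bl.ein[OF swap e2] K.pB_in G.pB_in by blast

lemma psi_pC: "k \<in> carrier K \<Longrightarrow> x \<in> carrier G \<Longrightarrow> pC (Ps k x) = \<beta>1 (pA k) (pC x)"
  using psi_app G.pA_eq i1 i2 by simp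
lemma psi_pD: "k \<in> carrier K \<Longrightarrow> x \<in> carrier G \<Longrightarrow> pD (Ps k x) = \<beta>2 (pB k) (pD x)"
  using psi_app G.pB_eq i1 i2 by simp
lemma psi_car: "k \<in> carrier K \<Longrightarrow> x \<in> carrier G \<Longrightarrow> Ps k x \<in> carrier G"
  using psi_app i1 i2 G.inA G.inB by simp

lemma e1uniq: "a \<in> A \<Longrightarrow> a' \<in> A \<Longrightarrow> c \<in> C \<Longrightarrow> \<beta>1 a c = \<beta>1 a' c \<Longrightarrow> a = a'"
  using ereg[OF e1, of c "\<beta>1 a c"] ein[OF e1] by metis
lemma e2uniq: "b \<in> B \<Longrightarrow> b' \<in> B \<Longrightarrow> d \<in> D \<Longrightarrow> \<beta>2 b d = \<beta>2 b' d \<Longrightarrow> b = b'"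
  using bl.ereg[OF swap e2, of d "\<beta>2 b d"] bl.ein[OF swap e2] by metis

lemma psi_hol: assumes k: "k \<in> carrier K" shows "Ps k \<in> holomorph G"
proof -
  obtain \<alpha>1 g1 where a1: "\<alpha>1 \<in> auto (G\<lparr>carrier := C\<rparr>)" "g1 \<in> C" "\<beta>1 (pA k) = (\<lambda>x\<in>C. \<alpha>1 x \<otimes>\<^bsub>G\<^esub> inv\<^bsub>G\<^esub> g1)"
    using ehol[OF e1 K.pA_in[OF k]] by blast
  obtain \<alpha>2 g2 where a2: "\<alpha>2 \<in> auto (G\<lparr>carrier := D\<rparr>)" "g2 \<in> D" "\<beta>2 (pB k) = (\<lambda>x\<in>D. \<alpha>2 x \<otimes>\<^bsub>G\<^esub> inv\<^bsub>G\<^esub> g2)"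
    using bl.ehol[OF swap e2 K.pB_in[OF k]] by blast
  let ?\<alpha> = "comb G C D \<alpha>1 \<alpha>2"
  have au: "?\<alpha> \<in> auto G" using comb_auto(1)[OF a1(1) a2(1)] .
  have gc: "g1 \<in> carrier G" "g2 \<in> carrier G" using a1(2) a2(2) G.inA G.inB by auto
  have ig: "inv\<^bsub>G\<^esub> g1 \<in> C" "inv\<^bsub>G\<^esub> g2 \<in> D"
    using subgroup.m_inv_closed[OF G.sA a1(2)] subgroup.m_inv_closed[OF G.sB a2(2)] by auto
  have eq: "Ps k = (\<lambda>x\<in>carrier G. ?\<alpha> x \<otimes>\<^bsub>G\<^esub> inv\<^bsub>G\<^esub> (g1 \<otimes>\<^bsub>G\<^esub> g2))"
  proof (rule ext)
    fix x show "Ps k x = (\<lambda>x\<in>carrier G. ?\<alpha> x \<otimes>\<^bsub>G\<^esub> inv\<^bsub>G\<^esub> (g1 \<otimes>\<^bsub>G\<^esub> g2)) x"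
    proof (cases "x \<in> carrier G")
      case False then show ?thesis unfolding psi_def using k by simp
    next
      case x: True
      have cx: "pC x \<in> C" "pD x \<in> D" using G.pA_in G.pB_in x by auto
      define u where "u = \<alpha>1 (pC x)"
      define v where "v = \<alpha>2 (pD x)"
      have uv: "u \<in> C" "v \<in> D" unfolding u_def v_def using aC_in[OF a1(1) cx(1)] bl.aC_in[OF swap a2(1) cx(2)] by auto
      have c: "u \<in> carrier G" "v \<in> carrier G" "inv\<^bsub>G\<^esub> g1 \<in> carrier G" "inv\<^bsub>G\<^esub> g2 \<in> carrier G"
        using uv ig G.inA G.inB by auto
      have cm1: "inv\<^bsub>G\<^esub> g1 \<otimes>\<^bsub>G\<^esub> v = v \<otimes>\<^bsub>G\<^esub> inv\<^bsub>G\<^esub> g1" using G.comm[OF ig(1) uv(2)] .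
      have cm2: "inv\<^bsub>G\<^esub> g1 \<otimes>\<^bsub>G\<^esub> inv\<^bsub>G\<^esub> g2 = inv\<^bsub>G\<^esub> g2 \<otimes>\<^bsub>G\<^esub> inv\<^bsub>G\<^esub> g1" using G.comm[OF ig(1) ig(2)] .
      have "Ps k x = (u \<otimes>\<^bsub>G\<^esub> inv\<^bsub>G\<^esub> g1) \<otimes>\<^bsub>G\<^esub> (v \<otimes>\<^bsub>G\<^esub> inv\<^bsub>G\<^esub> g2)"
        using psi_app[OF k x] a1(3) a2(3) cx unfolding u_def v_def by simp
      also have "\<dots> = u \<otimes>\<^bsub>G\<^esub> (inv\<^bsub>G\<^esub> g1 \<otimes>\<^bsub>G\<^esub> v) \<otimes>\<^bsub>G\<^esub> inv\<^bsub>G\<^esub> g2"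
        using c by (simp only: G.m_assoc G.m_closed)
      also have "\<dots> = u \<otimes>\<^bsub>G\<^esub> (v \<otimes>\<^bsub>G\<^esub> inv\<^bsub>G\<^esub> g1) \<otimes>\<^bsub>G\<^esub> inv\<^bsub>G\<^esub> g2" using cm1 by simp
      also have "\<dots> = (u \<otimes>\<^bsub>G\<^esub> v) \<otimes>\<^bsub>G\<^esub> (inv\<^bsub>G\<^esub> g1 \<otimes>\<^bsub>G\<^esub> inv\<^bsub>G\<^esub> g2)"
        using c by (simp only: G.m_assoc G.m_closed)
      also have "\<dots> = (u \<otimes>\<^bsub>G\<^esub> v) \<otimes>\<^bsub>G\<^esub> (inv\<^bsub>G\<^esub> g2 \<otimes>\<^bsub>G\<^esub> inv\<^bsub>G\<^esub> g1)" using cm2 by simp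
      also have "\<dots> = ?\<alpha> x \<otimes>\<^bsub>G\<^esub> inv\<^bsub>G\<^esub> (g1 \<otimes>\<^bsub>G\<^esub> g2)"
        using x gc G.inv_mult_group[OF gc] unfolding comb_def u_def v_def by simp
      finally show ?thesis using x by simp
    qed
  qed
  show ?thesis unfolding holomorph_def using au eq G.m_closed[OF gc] by blast
qed

lemma psi_re: "Ps \<in> regular_embeddings K G"
proof -
  have extp: "Ps \<in> extensional (carrier K)" unfolding psi_def by simp
  have Bj: "\<And>k. k \<in> carrier K \<Longrightarrow> Ps k \<in> Bij (carrier G)" using G.hol_Bij psi_hol by blast
  have hom: "Ps \<in> hom K (BijGroup (carrier G))"
  proof -
    have "Ps (k \<otimes>\<^bsub>K\<^esub> k') = compose (carrier G) (Ps k) (Ps k')" if kk: "k \<in> carrier K" "k' \<in> carrier K" for k k'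
    proof (rule ext)
      fix x show "Ps (k \<otimes>\<^bsub>K\<^esub> k') x = compose (carrier G) (Ps k) (Ps k') x"
      proof (cases "x \<in> carrier G")
        case False then show ?thesis unfolding psi_def compose_def using kk by simp
      next
        case x: True
        have kk': "k \<otimes>\<^bsub>K\<^esub> k' \<in> carrier K" using kk by simp
        have y: "Ps k' x \<in> carrier G" using psi_car[OF kk(2) x] .
        have "Ps (k \<otimes>\<^bsub>K\<^esub> k') x = \<beta>1 (pA k \<otimes>\<^bsub>K\<^esub> pA k') (pC x) \<otimes>\<^bsub>G\<^esub> \<beta>2 (pB k \<otimes>\<^bsub>K\<^esub> pB k') (pD x)"
          using psi_app[OF kk' x] K.pA_mult[OF kk] by simp
        also have "\<dots> = \<beta>1 (pA k) (\<beta>1 (pA k') (pC x)) \<otimes>\<^bsub>G\<^esub> \<beta>2 (pB k) (\<beta>2 (pB k') (pD x))"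
          using emult[OF e1 K.pA_in[OF kk(1)] K.pA_in[OF kk(2)] G.pA_in[OF x]]
            bl.emult[OF swap e2 K.pB_in[OF kk(1)] K.pB_in[OF kk(2)] G.pB_in[OF x]] by simp
        also have "\<dots> = Ps k (Ps k' x)"
          using psi_app[OF kk(1) y] psi_pC[OF kk(2) x] psi_pD[OF kk(2) x] by simp
        finally show ?thesis using x by (simp add: compose_def)
      qed
    qed
    then show ?thesis unfolding hom_def BijGroup_def using Bj by auto
  qed
  have regc: "\<forall>x\<in>carrier G. \<forall>y\<in>carrier G. \<exists>!k. k \<in> carrier K \<and> Ps k x = y"
  proof (intro ballI)
    fix x y assume xy: "x \<in> carrier G" "y \<in> carrier G"
    obtain a where a: "a \<in> A" "\<beta>1 a (pC x) = pC y" using ereg[OF e1 G.pA_in[OF xy(1)] G.pA_in[OF xy(2)]] by blast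
    obtain b where b: "b \<in> B" "\<beta>2 b (pD x) = pD y" using bl.ereg[OF swap e2 G.pB_in[OF xy(1)] G.pB_in[OF xy(2)]] by blast
    have abc: "a \<otimes>\<^bsub>K\<^esub> b \<in> carrier K" using a b K.inA K.inB by simp
    have ex: "Ps (a \<otimes>\<^bsub>K\<^esub> b) x = y"
      using psi_app[OF abc xy(1)] K.pA_eq[OF a(1) b(1)] K.pB_eq[OF a(1) b(1)] a b G.pAB[OF xy(2)] by simp
    show "\<exists>!k. k \<in> carrier K \<and> Ps k x = y"
    proof (rule ex1I[of _ "a \<otimes>\<^bsub>K\<^esub> b"])
      show "a \<otimes>\<^bsub>K\<^esub> b \<in> carrier K \<and> Ps (a \<otimes>\<^bsub>K\<^esub> b) x = y" using abc ex by simp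
      fix k assume k: "k \<in> carrier K \<and> Ps k x = y"
      have "\<beta>1 (pA k) (pC x) = \<beta>1 a (pC x)" using psi_pC[of k x] k xy a by simp
      then have 1: "pA k = a" using e1uniq[OF K.pA_in a(1) G.pA_in[OF xy(1)]] k by blast
      have "\<beta>2 (pB k) (pD x) = \<beta>2 b (pD x)" using psi_pD[of k x] k xy b by simp
      then have 2: "pB k = b" using e2uniq[OF K.pB_in b(1) G.pB_in[OF xy(1)]] k by blast
      show "k = a \<otimes>\<^bsub>K\<^esub> b" using K.pAB[of k] k 1 2 by simp
    qed
  qed
  have inj: "inj_on Ps (carrier K)"
    using reg_inj[of "carrier G" "carrier K" Ps] regc psi_car by blast
  show ?thesis unfolding regular_embeddings_def using extp hom inj psi_hol regc by auto
qed

lemma psi_A: "a \<in> A \<Longrightarrow> c \<in> C \<Longrightarrow> Ps a c = \<beta>1 a c"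
  using psi_app[of a c] K.inA G.inA K.pA_A K.pB_A G.pA_A G.pB_A bl.eone[OF swap e2 G.oneB]
    ein[OF e1] G.inA by simp
lemma psi_B: "b \<in> B \<Longrightarrow> d \<in> D \<Longrightarrow> Ps b d = \<beta>2 b d"
  using psi_app[of b d] K.inB G.inB K.pA_B K.pB_B G.pA_B G.pB_B eone[OF e1 G.oneA]
    bl.ein[OF swap e2] G.inB by simp

end

end

lemma quot_prod_card:
  assumes bij: "bij_betw \<Psi> (E1 \<times> E2) E"
    and R1: "R1 \<subseteq> E1 \<times> E1" and R2: "R2 \<subseteq> E2 \<times> E2" and R: "R \<subseteq> E \<times> E"
    and refl1: "\<And>x. x \<in> E1 \<Longrightarrow> (x,x) \<in> R1" and refl2: "\<And>y. y \<in> E2 \<Longrightarrow> (y,y) \<in> R2"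
    and rel: "\<And>x y x' y'. x \<in> E1 \<Longrightarrow> y \<in> E2 \<Longrightarrow> x' \<in> E1 \<Longrightarrow> y' \<in> E2 \<Longrightarrow>
       (\<Psi> (x,y), \<Psi> (x',y')) \<in> R \<longleftrightarrow> (x,x') \<in> R1 \<and> (y,y') \<in> R2"
  shows "card (E // R) = card (E1 // R1) * card (E2 // R2)"
proof -
  define F where "F = (\<lambda>(XX,YY). \<Psi> ` (XX \<times> YY))"
  have injP: "inj_on \<Psi> (E1 \<times> E2)" and imP: "\<Psi> ` (E1 \<times> E2) = E" using bij unfolding bij_betw_def by auto
  have cls: "R `` {\<Psi> (x,y)} = \<Psi> ` (R1``{x} \<times> R2``{y})" if xy: "x \<in> E1" "y \<in> E2" for x y
  proof
    show "R `` {\<Psi> (x,y)} \<subseteq> \<Psi> ` (R1``{x} \<times> R2``{y})"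
    proof
      fix z assume "z \<in> R `` {\<Psi> (x,y)}"
      then have z: "(\<Psi> (x,y), z) \<in> R" by simp
      then have "z \<in> E" using R by blast
      then obtain x' y' where p: "x' \<in> E1" "y' \<in> E2" "z = \<Psi> (x',y')" using imP by force
      then have "(x,x') \<in> R1 \<and> (y,y') \<in> R2" using rel[OF xy p(1,2)] z by simp
      then show "z \<in> \<Psi> ` (R1``{x} \<times> R2``{y})" using p(3) by blast
    qed
    show "\<Psi> ` (R1``{x} \<times> R2``{y}) \<subseteq> R `` {\<Psi> (x,y)}"
    proof
      fix z assume "z \<in> \<Psi> ` (R1``{x} \<times> R2``{y})"
      then obtain x' y' where p: "(x,x') \<in> R1" "(y,y') \<in> R2" "z = \<Psi> (x',y')" by blast
      have "x' \<in> E1" "y' \<in> E2" using p R1 R2 by auto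
      then have "(\<Psi> (x,y), \<Psi> (x',y')) \<in> R" using rel[OF xy] p by simp
      then show "z \<in> R `` {\<Psi> (x,y)}" using p(3) by simp
    qed
  qed
  have eq: "E // R = F ` ((E1//R1) \<times> (E2//R2))"
  proof
    show "E // R \<subseteq> F ` ((E1//R1) \<times> (E2//R2))"
    proof
      fix XX assume "XX \<in> E // R"
      then obtain e where e: "e \<in> E" "XX = R``{e}" by (auto elim: quotientE)
      then obtain x y where p: "x \<in> E1" "y \<in> E2" "e = \<Psi> (x,y)" using imP by force
      have "XX = F (R1``{x}, R2``{y})" using cls[OF p(1,2)] e p(3) unfolding F_def by simp
      moreover have "(R1``{x}, R2``{y}) \<in> (E1//R1) \<times> (E2//R2)" using quotientI[OF p(1)] quotientI[OF p(2)] by simp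
      ultimately show "XX \<in> F ` ((E1//R1) \<times> (E2//R2))" by blast
    qed
    show "F ` ((E1//R1) \<times> (E2//R2)) \<subseteq> E // R"
    proof
      fix Z assume "Z \<in> F ` ((E1//R1) \<times> (E2//R2))"
      then obtain XX YY where XY: "XX \<in> E1//R1" "YY \<in> E2//R2" "Z = F (XX,YY)" by blast
      obtain x where x: "x \<in> E1" "XX = R1``{x}" using XY(1) by (auto elim: quotientE)
      obtain y where y: "y \<in> E2" "YY = R2``{y}" using XY(2) by (auto elim: quotientE)
      have "Z = R `` {\<Psi> (x,y)}" using cls[OF x(1) y(1)] XY(3) x y unfolding F_def by simp
      moreover have "\<Psi> (x,y) \<in> E" using imP x y by blast
      ultimately show "Z \<in> E // R" using quotientI[of "\<Psi> (x,y)" E R] by simp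
    qed
  qed
  have injF: "inj_on F ((E1//R1) \<times> (E2//R2))"
  proof (rule inj_onI)
    fix p q assume pq: "p \<in> (E1//R1) \<times> (E2//R2)" "q \<in> (E1//R1) \<times> (E2//R2)" "F p = F q"
    obtain XX YY where p: "p = (XX,YY)" "XX \<in> E1//R1" "YY \<in> E2//R2" using pq(1) by blast
    obtain XX' YY' where q: "q = (XX',YY')" "XX' \<in> E1//R1" "YY' \<in> E2//R2" using pq(2) by blast
    have sub: "\<And>U. U \<in> E1//R1 \<Longrightarrow> U \<subseteq> E1" using R1 by (auto elim!: quotientE)
    have sub2: "\<And>U. U \<in> E2//R2 \<Longrightarrow> U \<subseteq> E2" using R2 by (auto elim!: quotientE)
    have ne: "\<And>U. U \<in> E1//R1 \<Longrightarrow> U \<noteq> {}" using refl1 by (auto elim!: quotientE)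
    have ne2: "\<And>U. U \<in> E2//R2 \<Longrightarrow> U \<noteq> {}" using refl2 by (auto elim!: quotientE)
    have "\<Psi> ` (XX \<times> YY) = \<Psi> ` (XX' \<times> YY')" using pq(3) p q unfolding F_def by simp
    moreover have s1: "XX \<times> YY \<subseteq> E1 \<times> E2" using sub[OF p(2)] sub2[OF p(3)] by blast
    moreover have s2: "XX' \<times> YY' \<subseteq> E1 \<times> E2" using sub[OF q(2)] sub2[OF q(3)] by blast
    ultimately have "XX \<times> YY = XX' \<times> YY'" using inj_on_image_eq_iff[OF injP s1 s2] by simp
    then have "XX = XX' \<and> YY = YY'" using ne[OF p(2)] ne2[OF p(3)] unfolding times_eq_iff by blast
    then show "p = q" using p q by simp
  qed
  have "card (E // R) = card ((E1//R1) \<times> (E2//R2))" using eq card_image[OF injF] by simp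
  then show ?thesis by (simp add: card_cartesian_product)
qed

lemma rel_refl:
  assumes "group G" "\<beta> \<in> regular_embeddings K G"
  shows "(\<beta>, \<beta>) \<in> aut_conj_rel K G"
proof -
  have "\<forall>\<gamma>\<in>carrier K. \<forall>x\<in>carrier G. \<beta> \<gamma> ((\<lambda>x\<in>carrier G. x) x) = (\<lambda>x\<in>carrier G. x) (\<beta> \<gamma> x)"
  proof (intro ballI)
    fix \<gamma> x assume a: "\<gamma> \<in> carrier K" "x \<in> carrier G"
    have "\<beta> \<gamma> \<in> Bij (carrier G)" using group.hol_Bij[OF assms(1) re_facts(4)[OF assms(2) a(1)]] .
    then have "\<beta> \<gamma> x \<in> carrier G" using Bij_in a(2) by metis
    then show "\<beta> \<gamma> ((\<lambda>x\<in>carrier G. x) x) = (\<lambda>x\<in>carrier G. x) (\<beta> \<gamma> x)" using a by simp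
  qed
  moreover have "(\<lambda>x\<in>carrier G. x) \<in> auto G" using group.id_in_auto[OF assms(1)] .
  ultimately have "\<exists>\<alpha>\<in>auto G. \<forall>\<gamma>\<in>carrier K. \<forall>x\<in>carrier G. \<beta> \<gamma> (\<alpha> x) = \<alpha> (\<beta> \<gamma> x)"
    by (rule bexI[of _ "\<lambda>x\<in>carrier G. x"])
  then show ?thesis unfolding aut_conj_rel_def using assms(2) by simp
qed

lemma (in blr) psi_phi: "psi K A B G C D (phi A C \<beta>) (phi B D \<beta>) = \<beta>"
proof (rule ext)
  fix k show "psi K A B G C D (phi A C \<beta>) (phi B D \<beta>) k = \<beta> k"
  proof (cases "k \<in> carrier K")
    case False
    then show ?thesis using re_facts(1)[OF reg] unfolding psi_def by (simp add: extensional_def)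
  next
    case k: True
    show ?thesis
    proof (rule ext)
      fix x show "psi K A B G C D (phi A C \<beta>) (phi B D \<beta>) k x = \<beta> k x"
      proof (cases "x \<in> carrier G")
        case False
        then show ?thesis using Bij_imp_extensional[OF bBij[OF k]] k unfolding psi_def
          by (simp add: extensional_def)
      next
        case x: True
        show ?thesis using decomp[OF k x] k x K.pA_in K.pB_in G.pA_in G.pB_in
          unfolding psi_def phi_def by simp
      qed
    qed
  qed
qed

context bl begin

lemma psi_inj:
  assumes e1: "\<beta>1 \<in> regular_embeddings (K\<lparr>carrier := A\<rparr>) (G\<lparr>carrier := C\<rparr>)"
    and e2: "\<beta>2 \<in> regular_embeddings (K\<lparr>carrier := B\<rparr>) (G\<lparr>carrier := D\<rparr>)"
    and e1': "\<beta>1' \<in> regular_embeddings (K\<lparr>carrier := A\<rparr>) (G\<lparr>carrier := C\<rparr>)"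
    and e2': "\<beta>2' \<in> regular_embeddings (K\<lparr>carrier := B\<rparr>) (G\<lparr>carrier := D\<rparr>)"
    and eq: "psi K A B G C D \<beta>1 \<beta>2 = psi K A B G C D \<beta>1' \<beta>2'"
  shows "\<beta>1 = \<beta>1' \<and> \<beta>2 = \<beta>2'"
proof
  show "\<beta>1 = \<beta>1'"
  proof (rule ext)
    fix a show "\<beta>1 a = \<beta>1' a"
    proof (cases "a \<in> A")
      case False then show ?thesis using eext[OF e1] eext[OF e1'] by (simp add: extensional_def)
    next
      case a: True
      show ?thesis
      proof (rule ext)
        fix c show "\<beta>1 a c = \<beta>1' a c"
        proof (cases "c \<in> C")
          case False then show ?thesis using eext2[OF e1 a] eext2[OF e1' a] by (simp add: extensional_def)
        next
          case True then show ?thesis using psi_A[OF e1 e2 a True] psi_A[OF e1' e2' a True] eq by simp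
        qed
      qed
    qed
  qed
  show "\<beta>2 = \<beta>2'"
  proof (rule ext)
    fix b show "\<beta>2 b = \<beta>2' b"
    proof (cases "b \<in> B")
      case False then show ?thesis using bl.eext[OF swap e2] bl.eext[OF swap e2'] by (simp add: extensional_def)
    next
      case b: True
      show ?thesis
      proof (rule ext)
        fix d show "\<beta>2 b d = \<beta>2' b d"
        proof (cases "d \<in> D")
          case False then show ?thesis using bl.eext2[OF swap e2 b] bl.eext2[OF swap e2' b] by (simp add: extensional_def)
        next
          case True then show ?thesis using psi_B[OF e1 e2 b True] psi_B[OF e1' e2' b True] eq by simp
        qed
      qed
    qed
  qed
qed

end

lemma acr_iff: "(x, y) \<in> aut_conj_rel K G \<longleftrightarrow> x \<in> regular_embeddings K G \<and> y \<in> regular_embeddings K G \<and>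
   (\<exists>\<alpha>\<in>auto G. \<forall>\<gamma>\<in>carrier K. \<forall>z\<in>carrier G. y \<gamma> (\<alpha> z) = \<alpha> (x \<gamma> z))"
  unfolding aut_conj_rel_def by simp

context bl begin

lemma psi_rel:
  assumes e1: "\<beta>1 \<in> regular_embeddings (K\<lparr>carrier := A\<rparr>) (G\<lparr>carrier := C\<rparr>)"
    and e2: "\<beta>2 \<in> regular_embeddings (K\<lparr>carrier := B\<rparr>) (G\<lparr>carrier := D\<rparr>)"
    and e1': "\<beta>1' \<in> regular_embeddings (K\<lparr>carrier := A\<rparr>) (G\<lparr>carrier := C\<rparr>)"
    and e2': "\<beta>2' \<in> regular_embeddings (K\<lparr>carrier := B\<rparr>) (G\<lparr>carrier := D\<rparr>)"
  shows "(psi K A B G C D \<beta>1 \<beta>2, psi K A B G C D \<beta>1' \<beta>2') \<in> aut_conj_rel K G \<longleftrightarrow>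
    (\<beta>1, \<beta>1') \<in> aut_conj_rel (K\<lparr>carrier := A\<rparr>) (G\<lparr>carrier := C\<rparr>) \<and>
    (\<beta>2, \<beta>2') \<in> aut_conj_rel (K\<lparr>carrier := B\<rparr>) (G\<lparr>carrier := D\<rparr>)"
proof -
  let ?P = "psi K A B G C D \<beta>1 \<beta>2"
  let ?P' = "psi K A B G C D \<beta>1' \<beta>2'"
  have PE: "?P \<in> regular_embeddings K G" "?P' \<in> regular_embeddings K G"
    using psi_re[OF e1 e2] psi_re[OF e1' e2'] by auto
  show ?thesis
  proof
    assume "(?P, ?P') \<in> aut_conj_rel K G"
    then obtain \<alpha> where a: "\<alpha> \<in> auto G" and H: "\<And>k x. k \<in> carrier K \<Longrightarrow> x \<in> carrier G \<Longrightarrow> ?P' k (\<alpha> x) = \<alpha> (?P k x)"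
      unfolding acr_iff by blast
    have "\<forall>a\<in>carrier (K\<lparr>carrier := A\<rparr>). \<forall>c\<in>carrier (G\<lparr>carrier := C\<rparr>). \<beta>1' a ((\<lambda>x\<in>C. \<alpha> x) c) = (\<lambda>x\<in>C. \<alpha> x) (\<beta>1 a c)"
    proof (intro ballI)
      fix a c assume ac: "a \<in> carrier (K\<lparr>carrier := A\<rparr>)" "c \<in> carrier (G\<lparr>carrier := C\<rparr>)"
      then have ac: "a \<in> A" "c \<in> C" by auto
      have "\<beta>1' a ((\<lambda>x\<in>C. \<alpha> x) c) = ?P' a (\<alpha> c)" using psi_A[OF e1' e2' ac(1) autC[OF a ac(2)]] ac by simp
      also have "\<dots> = \<alpha> (?P a c)" using H K.inA G.inA ac by blast
      also have "\<dots> = (\<lambda>x\<in>C. \<alpha> x) (\<beta>1 a c)" using psi_A[OF e1 e2 ac] ein[OF e1 ac] by simp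
      finally show "\<beta>1' a ((\<lambda>x\<in>C. \<alpha> x) c) = (\<lambda>x\<in>C. \<alpha> x) (\<beta>1 a c)" .
    qed
    then have 1: "(\<beta>1, \<beta>1') \<in> aut_conj_rel (K\<lparr>carrier := A\<rparr>) (G\<lparr>carrier := C\<rparr>)"
      unfolding acr_iff using e1 e1' auto_restrC[OF a] by blast
    have "\<forall>b\<in>carrier (K\<lparr>carrier := B\<rparr>). \<forall>d\<in>carrier (G\<lparr>carrier := D\<rparr>). \<beta>2' b ((\<lambda>x\<in>D. \<alpha> x) d) = (\<lambda>x\<in>D. \<alpha> x) (\<beta>2 b d)"
    proof (intro ballI)
      fix b d assume bd: "b \<in> carrier (K\<lparr>carrier := B\<rparr>)" "d \<in> carrier (G\<lparr>carrier := D\<rparr>)"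
      then have bd: "b \<in> B" "d \<in> D" by auto
      have "\<beta>2' b ((\<lambda>x\<in>D. \<alpha> x) d) = ?P' b (\<alpha> d)" using psi_B[OF e1' e2' bd(1) autD[OF a bd(2)]] bd by simp
      also have "\<dots> = \<alpha> (?P b d)" using H K.inB G.inB bd by blast
      also have "\<dots> = (\<lambda>x\<in>D. \<alpha> x) (\<beta>2 b d)" using psi_B[OF e1 e2 bd] bl.ein[OF swap e2 bd] by simp
      finally show "\<beta>2' b ((\<lambda>x\<in>D. \<alpha> x) d) = (\<lambda>x\<in>D. \<alpha> x) (\<beta>2 b d)" .
    qed
    then have 2: "(\<beta>2, \<beta>2') \<in> aut_conj_rel (K\<lparr>carrier := B\<rparr>) (G\<lparr>carrier := D\<rparr>)"
      unfolding acr_iff using e2 e2' bl.auto_restrC[OF swap a] by blast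
    show "(\<beta>1, \<beta>1') \<in> aut_conj_rel (K\<lparr>carrier := A\<rparr>) (G\<lparr>carrier := C\<rparr>) \<and>
      (\<beta>2, \<beta>2') \<in> aut_conj_rel (K\<lparr>carrier := B\<rparr>) (G\<lparr>carrier := D\<rparr>)" using 1 2 by simp
  next
    assume "(\<beta>1, \<beta>1') \<in> aut_conj_rel (K\<lparr>carrier := A\<rparr>) (G\<lparr>carrier := C\<rparr>) \<and>
      (\<beta>2, \<beta>2') \<in> aut_conj_rel (K\<lparr>carrier := B\<rparr>) (G\<lparr>carrier := D\<rparr>)"
    then obtain \<alpha>1 \<alpha>2 where a1: "\<alpha>1 \<in> auto (G\<lparr>carrier := C\<rparr>)" and a2: "\<alpha>2 \<in> auto (G\<lparr>carrier := D\<rparr>)"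
      and H1: "\<forall>a\<in>carrier (K\<lparr>carrier := A\<rparr>). \<forall>c\<in>carrier (G\<lparr>carrier := C\<rparr>). \<beta>1' a (\<alpha>1 c) = \<alpha>1 (\<beta>1 a c)"
      and H2: "\<forall>b\<in>carrier (K\<lparr>carrier := B\<rparr>). \<forall>d\<in>carrier (G\<lparr>carrier := D\<rparr>). \<beta>2' b (\<alpha>2 d) = \<alpha>2 (\<beta>2 b d)"
      unfolding acr_iff by blast
    have H1': "\<And>a c. a \<in> A \<Longrightarrow> c \<in> C \<Longrightarrow> \<beta>1' a (\<alpha>1 c) = \<alpha>1 (\<beta>1 a c)" using H1 by simp
    have H2': "\<And>b d. b \<in> B \<Longrightarrow> d \<in> D \<Longrightarrow> \<beta>2' b (\<alpha>2 d) = \<alpha>2 (\<beta>2 b d)" using H2 by simp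
    let ?\<alpha> = "comb G C D \<alpha>1 \<alpha>2"
    have au: "?\<alpha> \<in> auto G" using comb_auto(1)[OF a1 a2] .
    have "\<forall>k\<in>carrier K. \<forall>x\<in>carrier G. ?P' k (?\<alpha> x) = ?\<alpha> (?P k x)"
    proof (intro ballI)
      fix k x assume kx: "k \<in> carrier K" "x \<in> carrier G"
      have ax: "?\<alpha> x \<in> carrier G" using auto_car[OF au kx(2)] .
      have px: "?P k x \<in> carrier G" using psi_car[OF e1 e2 kx] .
      have "?P' k (?\<alpha> x) = \<beta>1' (pA k) (pC (?\<alpha> x)) \<otimes>\<^bsub>G\<^esub> \<beta>2' (pB k) (pD (?\<alpha> x))"
        using psi_app[OF e1' e2' kx(1) ax] .
      also have "\<dots> = \<beta>1' (pA k) (\<alpha>1 (pC x)) \<otimes>\<^bsub>G\<^esub> \<beta>2' (pB k) (\<alpha>2 (pD x))"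
        using comb_auto(2)[OF a1 a2 kx(2)] comb_auto(3)[OF a1 a2 kx(2)] by simp
      also have "\<dots> = \<alpha>1 (\<beta>1 (pA k) (pC x)) \<otimes>\<^bsub>G\<^esub> \<alpha>2 (\<beta>2 (pB k) (pD x))"
        using H1'[OF K.pA_in[OF kx(1)] G.pA_in[OF kx(2)]] H2'[OF K.pB_in[OF kx(1)] G.pB_in[OF kx(2)]] by simp
      also have "\<dots> = ?\<alpha> (?P k x)"
        using psi_pC[OF e1 e2 kx] psi_pD[OF e1 e2 kx] px unfolding comb_def by simp
      finally show "?P' k (?\<alpha> x) = ?\<alpha> (?P k x)" .
    qed
    then show "(?P, ?P') \<in> aut_conj_rel K G" unfolding acr_iff using PE au by blast
  qed
qed

lemma bl_self: "bl K A B G C D" using bl.swap[OF swap] .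

theorem hgs_split:
  "hgs_count K G = hgs_count (K\<lparr>carrier := A\<rparr>) (G\<lparr>carrier := C\<rparr>) * hgs_count (K\<lparr>carrier := B\<rparr>) (G\<lparr>carrier := D\<rparr>)"
proof -
  let ?E = "regular_embeddings K G"
  let ?E1 = "regular_embeddings (K\<lparr>carrier := A\<rparr>) (G\<lparr>carrier := C\<rparr>)"
  let ?E2 = "regular_embeddings (K\<lparr>carrier := B\<rparr>) (G\<lparr>carrier := D\<rparr>)"
  let ?\<Psi> = "\<lambda>p. psi K A B G C D (fst p) (snd p)"
  have bij: "bij_betw ?\<Psi> (?E1 \<times> ?E2) ?E"
  proof (rule bij_betw_imageI)
    show "inj_on ?\<Psi> (?E1 \<times> ?E2)"
    proof (rule inj_onI)
      fix p q assume pq: "p \<in> ?E1 \<times> ?E2" "q \<in> ?E1 \<times> ?E2" "?\<Psi> p = ?\<Psi> q"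
      have "fst p = fst q \<and> snd p = snd q" by (rule psi_inj) (use pq in auto)
      then show "p = q" by (simp add: prod_eq_iff)
    qed
    show "?\<Psi> ` (?E1 \<times> ?E2) = ?E"
    proof
      show "?\<Psi> ` (?E1 \<times> ?E2) \<subseteq> ?E" using psi_re by auto
      show "?E \<subseteq> ?\<Psi> ` (?E1 \<times> ?E2)"
      proof
        fix \<beta> assume b: "\<beta> \<in> ?E"
        have r: "blr K A B G C D \<beta>" unfolding blr_def blr_axioms_def using bl_self b by simp
        have "\<beta> = ?\<Psi> (phi A C \<beta>, phi B D \<beta>)" using blr.psi_phi[OF r] by simp
        moreover have "(phi A C \<beta>, phi B D \<beta>) \<in> ?E1 \<times> ?E2"
          using blr.phi_re[OF r] blr.phi_re[OF blr.swap_r[OF r]] by simp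
        ultimately show "\<beta> \<in> ?\<Psi> ` (?E1 \<times> ?E2)" by blast
      qed
    qed
  qed
  show ?thesis unfolding hgs_count_def
  proof (rule quot_prod_card[OF bij])
    show "aut_conj_rel (K\<lparr>carrier := A\<rparr>) (G\<lparr>carrier := C\<rparr>) \<subseteq> ?E1 \<times> ?E1" unfolding aut_conj_rel_def by auto
    show "aut_conj_rel (K\<lparr>carrier := B\<rparr>) (G\<lparr>carrier := D\<rparr>) \<subseteq> ?E2 \<times> ?E2" unfolding aut_conj_rel_def by auto
    show "aut_conj_rel K G \<subseteq> ?E \<times> ?E" unfolding aut_conj_rel_def by auto
    show "\<And>x. x \<in> ?E1 \<Longrightarrow> (x, x) \<in> aut_conj_rel (K\<lparr>carrier := A\<rparr>) (G\<lparr>carrier := C\<rparr>)"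
      using rel_refl[OF grpGC] by blast
    show "\<And>x. x \<in> ?E2 \<Longrightarrow> (x, x) \<in> aut_conj_rel (K\<lparr>carrier := B\<rparr>) (G\<lparr>carrier := D\<rparr>)"
      using rel_refl[OF bl.grpGC[OF swap]] by blast
    show "\<And>x y x' y'. x \<in> ?E1 \<Longrightarrow> y \<in> ?E2 \<Longrightarrow> x' \<in> ?E1 \<Longrightarrow> y' \<in> ?E2 \<Longrightarrow>
       ((?\<Psi> (x, y), ?\<Psi> (x', y')) \<in> aut_conj_rel K G) =
       ((x, x') \<in> aut_conj_rel (K\<lparr>carrier := A\<rparr>) (G\<lparr>carrier := C\<rparr>) \<and> (y, y') \<in> aut_conj_rel (K\<lparr>carrier := B\<rparr>) (G\<lparr>carrier := D\<rparr>))"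
      using psi_rel by simp
  qed
qed

end

lemma hgs_trivial:
  assumes gK: "group K" and gG: "group G" and cK: "carrier K = {\<one>\<^bsub>K\<^esub>}" and cG: "carrier G = {\<one>\<^bsub>G\<^esub>}"
  shows "hgs_count K G = 1"
proof -
  define \<beta>0 where "\<beta>0 = (\<lambda>k\<in>carrier K. \<lambda>x\<in>carrier G. x)"
  have Bj: "(\<lambda>x\<in>carrier G. x) \<in> Bij (carrier G)" by (rule id_Bij)
  have in0: "\<beta>0 \<in> regular_embeddings K G"
  proof -
    have ext0: "\<beta>0 \<in> extensional (carrier K)" unfolding \<beta>0_def by simp
    have hom0: "\<beta>0 \<in> hom K (BijGroup (carrier G))"
    proof -
      have "\<beta>0 \<in> carrier K \<rightarrow> carrier (BijGroup (carrier G))" unfolding \<beta>0_def BijGroup_def using Bj by simp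
      moreover have "\<beta>0 (x \<otimes>\<^bsub>K\<^esub> y) = \<beta>0 x \<otimes>\<^bsub>BijGroup (carrier G)\<^esub> \<beta>0 y"
        if "x \<in> carrier K" "y \<in> carrier K" for x y
      proof -
        have "x = \<one>\<^bsub>K\<^esub>" "y = \<one>\<^bsub>K\<^esub>" using that cK by auto
        then show ?thesis unfolding \<beta>0_def BijGroup_def using Bj cK group.is_monoid[OF gK]
          by (auto simp add: compose_def fun_eq_iff)
      qed
      ultimately show ?thesis unfolding hom_def by simp
    qed
    have inj0: "inj_on \<beta>0 (carrier K)" using cK by simp
    have hol0: "\<beta>0 k \<in> holomorph G" if "k \<in> carrier K" for k
    proof -
      have "\<beta>0 k = (\<lambda>x\<in>carrier G. (\<lambda>x\<in>carrier G. x) x \<otimes>\<^bsub>G\<^esub> inv\<^bsub>G\<^esub> \<one>\<^bsub>G\<^esub>)"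
        unfolding \<beta>0_def using that monoid.inv_one[OF group.is_monoid[OF gG]] group.is_monoid[OF gG] cG by auto
      then show ?thesis unfolding holomorph_def using group.id_in_auto[OF gG] group.is_monoid[OF gG]
        monoid.one_closed by blast
    qed
    have reg0: "\<forall>x\<in>carrier G. \<forall>y\<in>carrier G. \<exists>!\<gamma>. \<gamma> \<in> carrier K \<and> \<beta>0 \<gamma> x = y"
      unfolding \<beta>0_def using cK cG by auto
    show ?thesis unfolding regular_embeddings_def using ext0 hom0 inj0 hol0 reg0 by blast
  qed
  have uni: "\<beta> = \<beta>0" if b: "\<beta> \<in> regular_embeddings K G" for \<beta>
  proof (rule ext)
    fix k show "\<beta> k = \<beta>0 k"
    proof (cases "k \<in> carrier K")
      case False then show ?thesis using re_facts(1)[OF b] unfolding \<beta>0_def by (simp add: extensional_def)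
    next
      case True
      then have "k = \<one>\<^bsub>K\<^esub>" using cK by simp
      then show ?thesis using Bij_one[OF gK re_facts(2)[OF b]] True unfolding \<beta>0_def by simp
    qed
  qed
  have E: "regular_embeddings K G = {\<beta>0}" using in0 uni by blast
  show ?thesis unfolding hgs_count_def E quotient_def by simp
qed

lemma (in group) subgroup_incl':
  assumes "subgroup I G" "subgroup J G" "I \<subseteq> J"
  shows "subgroup I (G\<lparr>carrier := J\<rparr>)"
proof -
  have "inv\<^bsub>G\<lparr>carrier := J\<rparr>\<^esub> x = inv x" if "x \<in> I" for x
    using m_inv_consistent[OF assms(2)] that assms(3) by blast
  then show ?thesis using assms unfolding subgroup_def by auto
qed

lemma (in group) normal_prod:
  assumes sH: "subgroup H G" and nH: "\<And>x h. x \<in> carrier G \<Longrightarrow> h \<in> H \<Longrightarrow> x \<otimes> h \<otimes> inv x \<in> H"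
    and sP: "subgroup P G" and nP: "\<And>x h. x \<in> carrier G \<Longrightarrow> h \<in> P \<Longrightarrow> x \<otimes> h \<otimes> inv x \<in> P"
    and fin: "finite (carrier G)" and cop: "coprime (card H) (card P)"
  defines "HP \<equiv> (\<lambda>(h,p). h \<otimes> p) ` (H \<times> P)"
  shows "subgroup HP G" "\<And>x h. x \<in> carrier G \<Longrightarrow> h \<in> HP \<Longrightarrow> x \<otimes> h \<otimes> inv x \<in> HP"
    "card HP = card H * card P" "H \<subseteq> HP" "P \<subseteq> HP"
proof -
  have Hs: "H \<subseteq> carrier G" and Ps: "P \<subseteq> carrier G" using sH sP subgroup.subset by auto
  have fH: "finite H" and fP: "finite P" using Hs Ps fin finite_subset by auto
  have inter: "x = \<one>" if "x \<in> H" "x \<in> P" for x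
    using coprime_pow_one[of x "card H" "card P"] subgroup_pow_card[OF sH fH] subgroup_pow_card[OF sP fP]
      that cop Hs by blast
  have comm: "h \<otimes> p = p \<otimes> h" if hp: "h \<in> H" "p \<in> P" for h p
  proof -
    have a: "h \<in> carrier G" and b: "p \<in> carrier G" using hp Hs Ps by auto
    have "p \<otimes> inv h \<otimes> inv p \<in> H" using nH[OF b subgroup.m_inv_closed[OF sH hp(1)]] .
    then have 1: "h \<otimes> (p \<otimes> inv h \<otimes> inv p) \<in> H" using subgroup.m_closed[OF sH hp(1)] by blast
    have "h \<otimes> p \<otimes> inv h \<in> P" using nP[OF a hp(2)] .
    then have 2: "h \<otimes> p \<otimes> inv h \<otimes> inv p \<in> P" using subgroup.m_closed[OF sP _ subgroup.m_inv_closed[OF sP hp(2)]] by blast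
    have "h \<otimes> p \<otimes> inv h \<otimes> inv p = \<one>" using inter 1 2 a b by (simp add: m_assoc)
    then have "h \<otimes> p \<otimes> inv h \<otimes> inv p \<otimes> p \<otimes> h = p \<otimes> h" using a b by simp
    then show ?thesis using a b by (simp add: m_assoc)
  qed
  have uniq: "h = h' \<and> p = p'" if u: "h \<in> H" "p \<in> P" "h' \<in> H" "p' \<in> P" "h \<otimes> p = h' \<otimes> p'" for h p h' p'
  proof -
    have c: "h \<in> carrier G" "p \<in> carrier G" "h' \<in> carrier G" "p' \<in> carrier G" using u Hs Ps by auto
    have "inv h' \<otimes> h = inv h' \<otimes> (h \<otimes> p) \<otimes> inv p" using c by (simp add: m_assoc)
    also have "\<dots> = inv h' \<otimes> (h' \<otimes> p') \<otimes> inv p" using u by simp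
    also have "\<dots> = p' \<otimes> inv p" using c by (simp add: m_assoc[symmetric])
    finally have e: "inv h' \<otimes> h = p' \<otimes> inv p" .
    have "inv h' \<otimes> h \<in> H" using subgroup.m_closed[OF sH subgroup.m_inv_closed[OF sH u(3)] u(1)] .
    moreover have "p' \<otimes> inv p \<in> P" using subgroup.m_closed[OF sP u(4) subgroup.m_inv_closed[OF sP u(2)]] .
    ultimately have "inv h' \<otimes> h = \<one>" using inter e by simp
    moreover have "h' \<otimes> (inv h' \<otimes> h) = h" using c by (simp add: m_assoc[symmetric])
    ultimately have "h = h'" using c by simp
    then show ?thesis using u c l_cancel by metis
  qed
  have mem: "x \<in> HP \<longleftrightarrow> (\<exists>h\<in>H. \<exists>p\<in>P. x = h \<otimes> p)" for x unfolding HP_def by auto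
  show "subgroup HP G"
  proof (rule subgroupI)
    show "HP \<subseteq> carrier G" unfolding HP_def using Hs Ps by (auto intro!: m_closed)
    show "HP \<noteq> {}" using mem subgroup.one_closed[OF sH] subgroup.one_closed[OF sP] by blast
  next
    fix x assume "x \<in> HP"
    then obtain h p where hp: "h \<in> H" "p \<in> P" "x = h \<otimes> p" using mem by blast
    have c: "h \<in> carrier G" "p \<in> carrier G" using hp Hs Ps by auto
    have "inv x = inv p \<otimes> inv h" using hp(3) inv_mult_group c by simp
    also have "\<dots> = inv h \<otimes> inv p"
      using comm[OF subgroup.m_inv_closed[OF sH hp(1)] subgroup.m_inv_closed[OF sP hp(2)]] by simp
    finally show "inv x \<in> HP" using mem subgroup.m_inv_closed[OF sH hp(1)] subgroup.m_inv_closed[OF sP hp(2)] by blast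
  next
    fix x y assume "x \<in> HP" "y \<in> HP"
    then obtain h p h' p' where hp: "h \<in> H" "p \<in> P" "x = h \<otimes> p" "h' \<in> H" "p' \<in> P" "y = h' \<otimes> p'"
      using mem by metis
    have c: "h \<in> carrier G" "p \<in> carrier G" "h' \<in> carrier G" "p' \<in> carrier G" using hp Hs Ps by auto
    have cm: "p \<otimes> h' = h' \<otimes> p" using comm[OF hp(4) hp(2)] by simp
    have "x \<otimes> y = h \<otimes> (p \<otimes> h') \<otimes> p'" using hp c by (simp only: m_assoc m_closed)
    also have "\<dots> = h \<otimes> (h' \<otimes> p) \<otimes> p'" using cm by simp
    also have "\<dots> = (h \<otimes> h') \<otimes> (p \<otimes> p')" using c by (simp only: m_assoc m_closed)
    finally show "x \<otimes> y \<in> HP" using mem subgroup.m_closed[OF sH hp(1,4)] subgroup.m_closed[OF sP hp(2,5)] by blast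
  qed
  show "\<And>x h. x \<in> carrier G \<Longrightarrow> h \<in> HP \<Longrightarrow> x \<otimes> h \<otimes> inv x \<in> HP"
  proof -
    fix x y assume x: "x \<in> carrier G" and "y \<in> HP"
    then obtain h p where hp: "h \<in> H" "p \<in> P" "y = h \<otimes> p" using mem by blast
    have c: "h \<in> carrier G" "p \<in> carrier G" using hp Hs Ps by auto
    have ix: "inv x \<in> carrier G" using x by simp
    have "(x \<otimes> h \<otimes> inv x) \<otimes> (x \<otimes> p \<otimes> inv x) = x \<otimes> h \<otimes> (inv x \<otimes> x) \<otimes> p \<otimes> inv x"
      using c x ix by (simp only: m_assoc m_closed)
    also have "\<dots> = x \<otimes> h \<otimes> p \<otimes> inv x" using c x by simp
    also have "\<dots> = x \<otimes> y \<otimes> inv x" using c x ix hp(3) by (simp only: m_assoc m_closed)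
    finally have "x \<otimes> y \<otimes> inv x = (x \<otimes> h \<otimes> inv x) \<otimes> (x \<otimes> p \<otimes> inv x)" by simp
    then show "x \<otimes> y \<otimes> inv x \<in> HP" using mem nH[OF x hp(1)] nP[OF x hp(2)] by blast
  qed
  have "inj_on (\<lambda>(h,p). h \<otimes> p) (H \<times> P)" using uniq unfolding inj_on_def by auto
  then show "card HP = card H * card P" unfolding HP_def by (simp add: card_image card_cartesian_product)
  show "H \<subseteq> HP"
  proof
    fix h assume h: "h \<in> H"
    then have "h = h \<otimes> \<one>" using Hs by auto
    then show "h \<in> HP" using mem h subgroup.one_closed[OF sP] by blast
  qed
  show "P \<subseteq> HP"
  proof
    fix p assume p: "p \<in> P"
    then have "p = \<one> \<otimes> p" using Ps by auto
    then show "p \<in> HP" using mem p subgroup.one_closed[OF sH] by blast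
  qed
qed

lemma assembly:
  fixes \<Gamma> :: "('a,'c) monoid_scheme" and G :: "('b,'d) monoid_scheme"
    and P :: "nat \<Rightarrow> 'a set" and Q :: "nat \<Rightarrow> 'b set" and e :: "nat \<Rightarrow> nat"
  assumes g\<Gamma>: "group \<Gamma>" and gG: "group G" and f\<Gamma>: "finite (carrier \<Gamma>)" and fG: "finite (carrier G)"
    and S: "finite S"
  shows "(\<forall>p\<in>S. Factorial_Ring.prime p \<and> subgroup (P p) \<Gamma> \<and> (\<forall>x\<in>carrier \<Gamma>. \<forall>h\<in>P p. x \<otimes>\<^bsub>\<Gamma>\<^esub> h \<otimes>\<^bsub>\<Gamma>\<^esub> inv\<^bsub>\<Gamma>\<^esub> x \<in> P p)
       \<and> subgroup (Q p) G \<and> (\<forall>x\<in>carrier G. \<forall>h\<in>Q p. x \<otimes>\<^bsub>G\<^esub> h \<otimes>\<^bsub>G\<^esub> inv\<^bsub>G\<^esub> x \<in> Q p)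
       \<and> card (P p) = p ^ e p \<and> card (Q p) = p ^ e p) \<longrightarrow>
    (\<exists>H H'. subgroup H \<Gamma> \<and> (\<forall>x\<in>carrier \<Gamma>. \<forall>h\<in>H. x \<otimes>\<^bsub>\<Gamma>\<^esub> h \<otimes>\<^bsub>\<Gamma>\<^esub> inv\<^bsub>\<Gamma>\<^esub> x \<in> H)
       \<and> subgroup H' G \<and> (\<forall>x\<in>carrier G. \<forall>h\<in>H'. x \<otimes>\<^bsub>G\<^esub> h \<otimes>\<^bsub>G\<^esub> inv\<^bsub>G\<^esub> x \<in> H')
       \<and> card H = (\<Prod>p\<in>S. p ^ e p) \<and> card H' = (\<Prod>p\<in>S. p ^ e p)
       \<and> hgs_count (\<Gamma>\<lparr>carrier := H\<rparr>) (G\<lparr>carrier := H'\<rparr>) =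
         (\<Prod>p\<in>S. hgs_count (\<Gamma>\<lparr>carrier := P p\<rparr>) (G\<lparr>carrier := Q p\<rparr>)))"
  using S
proof (induction S rule: finite_induct)
  case empty
  interpret \<Gamma>: group \<Gamma> by (rule g\<Gamma>)
  interpret G: group G by (rule gG)
  have t1: "group (\<Gamma>\<lparr>carrier := {\<one>\<^bsub>\<Gamma>\<^esub>}\<rparr>)" using \<Gamma>.subgroup_imp_group[OF \<Gamma>.triv_subgroup] .
  have t2: "group (G\<lparr>carrier := {\<one>\<^bsub>G\<^esub>}\<rparr>)" using G.subgroup_imp_group[OF G.triv_subgroup] .
  have "hgs_count (\<Gamma>\<lparr>carrier := {\<one>\<^bsub>\<Gamma>\<^esub>}\<rparr>) (G\<lparr>carrier := {\<one>\<^bsub>G\<^esub>}\<rparr>) = 1"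
    by (rule hgs_trivial[OF t1 t2]) simp_all
  moreover have "\<forall>x\<in>carrier \<Gamma>. \<forall>h\<in>{\<one>\<^bsub>\<Gamma>\<^esub>}. x \<otimes>\<^bsub>\<Gamma>\<^esub> h \<otimes>\<^bsub>\<Gamma>\<^esub> inv\<^bsub>\<Gamma>\<^esub> x \<in> {\<one>\<^bsub>\<Gamma>\<^esub>}" by simp
  moreover have "\<forall>x\<in>carrier G. \<forall>h\<in>{\<one>\<^bsub>G\<^esub>}. x \<otimes>\<^bsub>G\<^esub> h \<otimes>\<^bsub>G\<^esub> inv\<^bsub>G\<^esub> x \<in> {\<one>\<^bsub>G\<^esub>}" by simp
  ultimately show ?case
    apply (intro impI exI[of _ "{\<one>\<^bsub>\<Gamma>\<^esub>}"] exI[of _ "{\<one>\<^bsub>G\<^esub>}"])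
    using \<Gamma>.triv_subgroup G.triv_subgroup by simp
next
  case (insert q S)
  interpret \<Gamma>: group \<Gamma> by (rule g\<Gamma>)
  interpret G: group G by (rule gG)
  show ?case
  proof
    assume hyp: "\<forall>p\<in>insert q S. Factorial_Ring.prime p \<and> subgroup (P p) \<Gamma> \<and> (\<forall>x\<in>carrier \<Gamma>. \<forall>h\<in>P p. x \<otimes>\<^bsub>\<Gamma>\<^esub> h \<otimes>\<^bsub>\<Gamma>\<^esub> inv\<^bsub>\<Gamma>\<^esub> x \<in> P p)
       \<and> subgroup (Q p) G \<and> (\<forall>x\<in>carrier G. \<forall>h\<in>Q p. x \<otimes>\<^bsub>G\<^esub> h \<otimes>\<^bsub>G\<^esub> inv\<^bsub>G\<^esub> x \<in> Q p)
       \<and> card (P p) = p ^ e p \<and> card (Q p) = p ^ e p"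
    then obtain H H' where sH: "subgroup H \<Gamma>" and nH: "\<forall>x\<in>carrier \<Gamma>. \<forall>h\<in>H. x \<otimes>\<^bsub>\<Gamma>\<^esub> h \<otimes>\<^bsub>\<Gamma>\<^esub> inv\<^bsub>\<Gamma>\<^esub> x \<in> H"
       and sH': "subgroup H' G" and nH': "\<forall>x\<in>carrier G. \<forall>h\<in>H'. x \<otimes>\<^bsub>G\<^esub> h \<otimes>\<^bsub>G\<^esub> inv\<^bsub>G\<^esub> x \<in> H'"
       and cH: "card H = (\<Prod>p\<in>S. p ^ e p)" and cH': "card H' = (\<Prod>p\<in>S. p ^ e p)"
       and hc: "hgs_count (\<Gamma>\<lparr>carrier := H\<rparr>) (G\<lparr>carrier := H'\<rparr>) = (\<Prod>p\<in>S. hgs_count (\<Gamma>\<lparr>carrier := P p\<rparr>) (G\<lparr>carrier := Q p\<rparr>))"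
      using insert.IH by auto
    have hq: "Factorial_Ring.prime q" "subgroup (P q) \<Gamma>" "\<forall>x\<in>carrier \<Gamma>. \<forall>h\<in>P q. x \<otimes>\<^bsub>\<Gamma>\<^esub> h \<otimes>\<^bsub>\<Gamma>\<^esub> inv\<^bsub>\<Gamma>\<^esub> x \<in> P q"
      "subgroup (Q q) G" "\<forall>x\<in>carrier G. \<forall>h\<in>Q q. x \<otimes>\<^bsub>G\<^esub> h \<otimes>\<^bsub>G\<^esub> inv\<^bsub>G\<^esub> x \<in> Q q"
      "card (P q) = q ^ e q" "card (Q q) = q ^ e q" using hyp by auto
    have cop0: "coprime (\<Prod>p\<in>S. p ^ e p) (q ^ e q)"
    proof (rule prod_coprime_left)
      fix p assume p: "p \<in> S"
      have "Factorial_Ring.prime p" using hyp p by auto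
      then have "coprime p q" using primes_coprime[OF _ hq(1)] p insert.hyps(2) by blast
      then show "coprime (p ^ e p) (q ^ e q)" by simp
    qed
    have copP: "coprime (card H) (card (P q))" using cop0 cH hq(6) by simp
    have copQ: "coprime (card H') (card (Q q))" using cop0 cH' hq(7) by simp
    define HP where "HP = (\<lambda>(h,p). h \<otimes>\<^bsub>\<Gamma>\<^esub> p) ` (H \<times> P q)"
    define HQ where "HQ = (\<lambda>(h,p). h \<otimes>\<^bsub>G\<^esub> p) ` (H' \<times> Q q)"
    note np = \<Gamma>.normal_prod[OF sH _ hq(2) _ f\<Gamma> copP, folded HP_def]
    note nq = G.normal_prod[OF sH' _ hq(4) _ fG copQ, folded HQ_def]
    have sHP: "subgroup HP \<Gamma>" using np(1) nH hq(3) by blast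
    have nHP: "\<forall>x\<in>carrier \<Gamma>. \<forall>h\<in>HP. x \<otimes>\<^bsub>\<Gamma>\<^esub> h \<otimes>\<^bsub>\<Gamma>\<^esub> inv\<^bsub>\<Gamma>\<^esub> x \<in> HP" using np(2) nH hq(3) by blast
    have cHP: "card HP = card H * card (P q)" using np(3) nH hq(3) by blast
    have HHP: "H \<subseteq> HP" "P q \<subseteq> HP" using np(4,5) nH hq(3) by blast+
    have sHQ: "subgroup HQ G" using nq(1) nH' hq(5) by blast
    have nHQ: "\<forall>x\<in>carrier G. \<forall>h\<in>HQ. x \<otimes>\<^bsub>G\<^esub> h \<otimes>\<^bsub>G\<^esub> inv\<^bsub>G\<^esub> x \<in> HQ" using nq(2) nH' hq(5) by blast
    have cHQ: "card HQ = card H' * card (Q q)" using nq(3) nH' hq(5) by blast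
    have HHQ: "H' \<subseteq> HQ" "Q q \<subseteq> HQ" using nq(4,5) nH' hq(5) by blast+
    have finHP: "finite HP" using sHP subgroup.subset f\<Gamma> finite_subset by blast
    have finHQ: "finite HQ" using sHQ subgroup.subset fG finite_subset by blast
    have d1: "dprod (\<Gamma>\<lparr>carrier := HP\<rparr>) H (P q)"
      unfolding dprod_def dprod_axioms_def
    proof (intro conjI allI impI)
      show "group (\<Gamma>\<lparr>carrier := HP\<rparr>)" using \<Gamma>.subgroup_imp_group[OF sHP] .
      show "subgroup H (\<Gamma>\<lparr>carrier := HP\<rparr>)" using \<Gamma>.subgroup_incl'[OF sH sHP HHP(1)] .
      show "subgroup (P q) (\<Gamma>\<lparr>carrier := HP\<rparr>)" using \<Gamma>.subgroup_incl'[OF hq(2) sHP HHP(2)] .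
      fix x h assume "x \<in> carrier (\<Gamma>\<lparr>carrier := HP\<rparr>)" "h \<in> H"
      then show "x \<otimes>\<^bsub>\<Gamma>\<lparr>carrier := HP\<rparr>\<^esub> h \<otimes>\<^bsub>\<Gamma>\<lparr>carrier := HP\<rparr>\<^esub> inv\<^bsub>\<Gamma>\<lparr>carrier := HP\<rparr>\<^esub> x \<in> H"
        using \<Gamma>.m_inv_consistent[OF sHP] nH subgroup.subset[OF sHP] by auto
    next
      fix x h assume "x \<in> carrier (\<Gamma>\<lparr>carrier := HP\<rparr>)" "h \<in> P q"
      then show "x \<otimes>\<^bsub>\<Gamma>\<lparr>carrier := HP\<rparr>\<^esub> h \<otimes>\<^bsub>\<Gamma>\<lparr>carrier := HP\<rparr>\<^esub> inv\<^bsub>\<Gamma>\<lparr>carrier := HP\<rparr>\<^esub> x \<in> P q"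
        using \<Gamma>.m_inv_consistent[OF sHP] hq(3) subgroup.subset[OF sHP] by auto
    qed (use finHP copP cHP in auto)
    have d2: "dprod (G\<lparr>carrier := HQ\<rparr>) H' (Q q)"
      unfolding dprod_def dprod_axioms_def
    proof (intro conjI allI impI)
      show "group (G\<lparr>carrier := HQ\<rparr>)" using G.subgroup_imp_group[OF sHQ] .
      show "subgroup H' (G\<lparr>carrier := HQ\<rparr>)" using G.subgroup_incl'[OF sH' sHQ HHQ(1)] .
      show "subgroup (Q q) (G\<lparr>carrier := HQ\<rparr>)" using G.subgroup_incl'[OF hq(4) sHQ HHQ(2)] .
      fix x h assume "x \<in> carrier (G\<lparr>carrier := HQ\<rparr>)" "h \<in> H'"
      then show "x \<otimes>\<^bsub>G\<lparr>carrier := HQ\<rparr>\<^esub> h \<otimes>\<^bsub>G\<lparr>carrier := HQ\<rparr>\<^esub> inv\<^bsub>G\<lparr>carrier := HQ\<rparr>\<^esub> x \<in> H'"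
        using G.m_inv_consistent[OF sHQ] nH' subgroup.subset[OF sHQ] by auto
    next
      fix x h assume "x \<in> carrier (G\<lparr>carrier := HQ\<rparr>)" "h \<in> Q q"
      then show "x \<otimes>\<^bsub>G\<lparr>carrier := HQ\<rparr>\<^esub> h \<otimes>\<^bsub>G\<lparr>carrier := HQ\<rparr>\<^esub> inv\<^bsub>G\<lparr>carrier := HQ\<rparr>\<^esub> x \<in> Q q"
        using G.m_inv_consistent[OF sHQ] hq(5) subgroup.subset[OF sHQ] by auto
    qed (use finHQ copQ cHQ in auto)
    have b: "bl (\<Gamma>\<lparr>carrier := HP\<rparr>) H (P q) (G\<lparr>carrier := HQ\<rparr>) H' (Q q)"
      unfolding bl_def bl_axioms_def using d1 d2 cH cH' hq(6,7) by simp
    have "hgs_count (\<Gamma>\<lparr>carrier := HP\<rparr>) (G\<lparr>carrier := HQ\<rparr>) =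
      hgs_count (\<Gamma>\<lparr>carrier := H\<rparr>) (G\<lparr>carrier := H'\<rparr>) * hgs_count (\<Gamma>\<lparr>carrier := P q\<rparr>) (G\<lparr>carrier := Q q\<rparr>)"
      using bl.hgs_split[OF b] by simp
    also have "\<dots> = (\<Prod>p\<in>insert q S. hgs_count (\<Gamma>\<lparr>carrier := P p\<rparr>) (G\<lparr>carrier := Q p\<rparr>))"
      using hc insert.hyps by (simp add: mult.commute)
    finally have hc2: "hgs_count (\<Gamma>\<lparr>carrier := HP\<rparr>) (G\<lparr>carrier := HQ\<rparr>) =
      (\<Prod>p\<in>insert q S. hgs_count (\<Gamma>\<lparr>carrier := P p\<rparr>) (G\<lparr>carrier := Q p\<rparr>))" .
    have c1: "card HP = (\<Prod>p\<in>insert q S. p ^ e p)" using cHP cH hq(6) insert.hyps by (simp add: mult.commute)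
    have c2: "card HQ = (\<Prod>p\<in>insert q S. p ^ e p)" using cHQ cH' hq(7) insert.hyps by (simp add: mult.commute)
    show "\<exists>H H'. subgroup H \<Gamma> \<and> (\<forall>x\<in>carrier \<Gamma>. \<forall>h\<in>H. x \<otimes>\<^bsub>\<Gamma>\<^esub> h \<otimes>\<^bsub>\<Gamma>\<^esub> inv\<^bsub>\<Gamma>\<^esub> x \<in> H)
       \<and> subgroup H' G \<and> (\<forall>x\<in>carrier G. \<forall>h\<in>H'. x \<otimes>\<^bsub>G\<^esub> h \<otimes>\<^bsub>G\<^esub> inv\<^bsub>G\<^esub> x \<in> H')
       \<and> card H = (\<Prod>p\<in>insert q S. p ^ e p) \<and> card H' = (\<Prod>p\<in>insert q S. p ^ e p)
       \<and> hgs_count (\<Gamma>\<lparr>carrier := H\<rparr>) (G\<lparr>carrier := H'\<rparr>) =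
         (\<Prod>p\<in>insert q S. hgs_count (\<Gamma>\<lparr>carrier := P p\<rparr>) (G\<lparr>carrier := Q p\<rparr>))"
      using sHP nHP sHQ nHQ c1 c2 hc2 by blast
  qed
qed

lemma (in group) lc_sub: "lower_central G i \<subseteq> carrier G"
proof (induction i)
  case 0 then show ?case by simp
next
  case (Suc i)
  have "(\<Union>x \<in> carrier G. \<Union>y \<in> lower_central G i. {x \<otimes> y \<otimes> inv x \<otimes> inv y}) \<subseteq> carrier G"
    using Suc by auto
  then show ?case using generate_incl by simp
qed

lemma (in group) nil_normalizer:
  assumes lc: "lower_central G k = {\<one>}" and sM: "subgroup M G" and ne: "M \<noteq> carrier G"
  shows "\<exists>y\<in>carrier G. y \<notin> M \<and> (\<forall>h\<in>M. y \<otimes> h \<otimes> inv y \<in> M)"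
proof -
  have Ms: "M \<subseteq> carrier G" using sM subgroup.subset by blast
  have ex: "lower_central G k \<subseteq> M" using lc subgroup.one_closed[OF sM] by simp
  define i where "i = (LEAST i. lower_central G i \<subseteq> M)"
  have i1: "lower_central G i \<subseteq> M" unfolding i_def using LeastI[of "\<lambda>i. lower_central G i \<subseteq> M", OF ex] .
  have "i \<noteq> 0" using i1 ne Ms by auto
  then obtain j where j: "i = Suc j" using not0_implies_Suc by blast
  have "\<not> lower_central G j \<subseteq> M" using not_less_Least[of j "\<lambda>i. lower_central G i \<subseteq> M"] j unfolding i_def by simp
  then obtain y where y: "y \<in> lower_central G j" "y \<notin> M" by blast
  have yc: "y \<in> carrier G" using y(1) lc_sub by blast
  have "y \<otimes> h \<otimes> inv y \<in> M" if h: "h \<in> M" for h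
  proof -
    have ih: "inv h \<in> M" using subgroup.m_inv_closed[OF sM h] .
    have hc: "h \<in> carrier G" "inv h \<in> carrier G" using h ih Ms by auto
    have g: "inv h \<otimes> y \<otimes> inv (inv h) \<otimes> inv y \<in> (\<Union>x \<in> carrier G. \<Union>y \<in> lower_central G j. {x \<otimes> y \<otimes> inv x \<otimes> inv y})"
      using hc(2) y(1) by blast
    have "inv h \<otimes> y \<otimes> inv (inv h) \<otimes> inv y \<in> lower_central G (Suc j)"
      using generate.incl[OF g] by simp
    then have c: "inv h \<otimes> y \<otimes> h \<otimes> inv y \<in> M" using i1 j hc(1) by auto
    have "h \<otimes> (inv h \<otimes> y \<otimes> h \<otimes> inv y) = y \<otimes> h \<otimes> inv y" using hc yc by (simp add: m_assoc[symmetric])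
    then show ?thesis using subgroup.m_closed[OF sM h c] by simp
  qed
  then show ?thesis using yc y(2) by blast
qed

lemma (in group) card_mult:
  assumes sP: "subgroup P G" and sQ: "subgroup Q G" and fin: "finite (carrier G)"
  shows "card ((\<lambda>(x,y). x \<otimes> y) ` (P \<times> Q)) * card (P \<inter> Q) = card P * card Q"
proof -
  let ?f = "\<lambda>(x,y). x \<otimes> y"
  let ?PQ = "?f ` (P \<times> Q)"
  have Ps: "P \<subseteq> carrier G" and Qs: "Q \<subseteq> carrier G" using sP sQ subgroup.subset by auto
  have fP: "finite P" and fQ: "finite Q" using Ps Qs fin finite_subset by auto
  define F where "F z = {pq \<in> P \<times> Q. ?f pq = z}" for z
  have U: "P \<times> Q = (\<Union>z\<in>?PQ. F z)" unfolding F_def by auto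
  have cF: "card (F z) = card (P \<inter> Q)" if z: "z \<in> ?PQ" for z
  proof -
    obtain x0 y0 where xy0: "x0 \<in> P" "y0 \<in> Q" "z = x0 \<otimes> y0" using z by auto
    have c0: "x0 \<in> carrier G" "y0 \<in> carrier G" using xy0 Ps Qs by auto
    have "bij_betw (\<lambda>t. (x0 \<otimes> t, inv t \<otimes> y0)) (P \<inter> Q) (F z)"
    proof (rule bij_betw_imageI)
      show "inj_on (\<lambda>t. (x0 \<otimes> t, inv t \<otimes> y0)) (P \<inter> Q)"
      proof (rule inj_onI)
        fix s t assume st: "s \<in> P \<inter> Q" "t \<in> P \<inter> Q" "(x0 \<otimes> s, inv s \<otimes> y0) = (x0 \<otimes> t, inv t \<otimes> y0)"
        have sc: "s \<in> carrier G" "t \<in> carrier G" using st Ps by auto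
        have "x0 \<otimes> s = x0 \<otimes> t" using st(3) by simp
        then show "s = t" using sc c0 by simp
      qed
      show "(\<lambda>t. (x0 \<otimes> t, inv t \<otimes> y0)) ` (P \<inter> Q) = F z"
      proof
        show "(\<lambda>t. (x0 \<otimes> t, inv t \<otimes> y0)) ` (P \<inter> Q) \<subseteq> F z"
        proof
          fix w assume "w \<in> (\<lambda>t. (x0 \<otimes> t, inv t \<otimes> y0)) ` (P \<inter> Q)"
          then obtain t where t: "t \<in> P" "t \<in> Q" "w = (x0 \<otimes> t, inv t \<otimes> y0)" by blast
          have tc: "t \<in> carrier G" using t Ps by auto
          have "x0 \<otimes> t \<in> P" using subgroup.m_closed[OF sP xy0(1) t(1)] .
          moreover have "inv t \<otimes> y0 \<in> Q" using subgroup.m_closed[OF sQ subgroup.m_inv_closed[OF sQ t(2)] xy0(2)] .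
          moreover have "x0 \<otimes> t \<otimes> (inv t \<otimes> y0) = z"
          proof -
            have itc: "inv t \<in> carrier G" using tc by simp
            have "x0 \<otimes> t \<otimes> (inv t \<otimes> y0) = x0 \<otimes> (t \<otimes> inv t) \<otimes> y0" using c0 tc itc by (simp only: m_assoc m_closed)
            then show ?thesis using xy0 c0 tc by simp
          qed
          ultimately show "w \<in> F z" unfolding F_def using t(3) by simp
        qed
        show "F z \<subseteq> (\<lambda>t. (x0 \<otimes> t, inv t \<otimes> y0)) ` (P \<inter> Q)"
        proof
          fix w assume "w \<in> F z"
          then obtain x y where w: "w = (x,y)" "x \<in> P" "y \<in> Q" "x \<otimes> y = z" unfolding F_def by auto
          have c: "x \<in> carrier G" "y \<in> carrier G" using w Ps Qs by auto
          define t where "t = inv x0 \<otimes> x"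
          have tP: "t \<in> P" unfolding t_def using subgroup.m_closed[OF sP subgroup.m_inv_closed[OF sP xy0(1)] w(2)] .
          have "t = inv x0 \<otimes> (x \<otimes> y) \<otimes> inv y" unfolding t_def using c c0 by (simp add: m_assoc)
          also have "\<dots> = inv x0 \<otimes> (x0 \<otimes> y0) \<otimes> inv y" using w xy0 by simp
          also have "\<dots> = y0 \<otimes> inv y" using c c0 by (simp add: m_assoc[symmetric])
          finally have tQ': "t = y0 \<otimes> inv y" .
          have tQ: "t \<in> Q" using tQ' subgroup.m_closed[OF sQ xy0(2) subgroup.m_inv_closed[OF sQ w(3)]] by simp
          have tc: "t \<in> carrier G" using tP Ps by auto
          have e1: "x0 \<otimes> t = x" unfolding t_def using c c0 by (simp add: m_assoc[symmetric])
          have "inv t \<otimes> y0 = inv (y0 \<otimes> inv y) \<otimes> y0" using tQ' by simp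
          also have "\<dots> = y \<otimes> inv y0 \<otimes> y0" using c c0 by (simp add: inv_mult_group)
          also have "\<dots> = y" using c c0 by (simp add: m_assoc)
          finally have e2: "inv t \<otimes> y0 = y" .
          show "w \<in> (\<lambda>t. (x0 \<otimes> t, inv t \<otimes> y0)) ` (P \<inter> Q)" using e1 e2 w(1) tP tQ by force
        qed
      qed
    qed
    then show ?thesis using bij_betw_same_card by fastforce
  qed
  have "card (P \<times> Q) = card (\<Union>z\<in>?PQ. F z)" by (rule arg_cong[where f=card, OF U])
  also have "\<dots> = (\<Sum>z\<in>?PQ. card (F z))"
  proof (rule card_UN_disjoint)
    show "finite ?PQ" using fP fQ by simp
    show "\<forall>z\<in>?PQ. finite (F z)" unfolding F_def using fP fQ by auto
    show "\<forall>z\<in>?PQ. \<forall>z'\<in>?PQ. z \<noteq> z' \<longrightarrow> F z \<inter> F z' = {}" unfolding F_def by auto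
  qed
  also have "\<dots> = (\<Sum>z\<in>?PQ. card (P \<inter> Q))" using cF by simp
  also have "\<dots> = card ?PQ * card (P \<inter> Q)" by simp
  finally show ?thesis by (simp add: card_cartesian_product)
qed

lemma (in group) mult_subgroup:
  assumes sP: "subgroup P G" and sQ: "subgroup Q G"
    and nm: "\<And>q h. q \<in> Q \<Longrightarrow> h \<in> P \<Longrightarrow> q \<otimes> h \<otimes> inv q \<in> P"
  shows "subgroup ((\<lambda>(x,y). x \<otimes> y) ` (P \<times> Q)) G"
proof -
  have Ps: "P \<subseteq> carrier G" and Qs: "Q \<subseteq> carrier G" using sP sQ subgroup.subset by auto
  have mem: "z \<in> (\<lambda>(x,y). x \<otimes> y) ` (P \<times> Q) \<longleftrightarrow> (\<exists>x\<in>P. \<exists>y\<in>Q. z = x \<otimes> y)" for z by auto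
  show ?thesis
  proof (rule subgroupI)
    show "(\<lambda>(x,y). x \<otimes> y) ` (P \<times> Q) \<subseteq> carrier G" using Ps Qs by (auto intro!: m_closed)
    show "(\<lambda>(x,y). x \<otimes> y) ` (P \<times> Q) \<noteq> {}" using subgroup.one_closed[OF sP] subgroup.one_closed[OF sQ] by blast
  next
    fix z assume "z \<in> (\<lambda>(x,y). x \<otimes> y) ` (P \<times> Q)"
    then obtain x y where xy: "x \<in> P" "y \<in> Q" "z = x \<otimes> y" using mem by blast
    have c: "x \<in> carrier G" "y \<in> carrier G" using xy Ps Qs by auto
    have iy: "inv y \<in> Q" using subgroup.m_inv_closed[OF sQ xy(2)] .
    have "inv z = inv y \<otimes> inv x" using xy c inv_mult_group by simp
    also have "\<dots> = (inv y \<otimes> inv x \<otimes> inv (inv y)) \<otimes> inv y" using c by (simp add: m_assoc)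
    finally have "inv z = (inv y \<otimes> inv x \<otimes> inv (inv y)) \<otimes> inv y" .
    moreover have "inv y \<otimes> inv x \<otimes> inv (inv y) \<in> P" using nm[OF iy subgroup.m_inv_closed[OF sP xy(1)]] .
    ultimately show "inv z \<in> (\<lambda>(x,y). x \<otimes> y) ` (P \<times> Q)" using mem iy by blast
  next
    fix z w assume "z \<in> (\<lambda>(x,y). x \<otimes> y) ` (P \<times> Q)" "w \<in> (\<lambda>(x,y). x \<otimes> y) ` (P \<times> Q)"
    then obtain x y x' y' where xy: "x \<in> P" "y \<in> Q" "z = x \<otimes> y" "x' \<in> P" "y' \<in> Q" "w = x' \<otimes> y'"
      using mem by metis
    have c: "x \<in> carrier G" "y \<in> carrier G" "x' \<in> carrier G" "y' \<in> carrier G" using xy Ps Qs by auto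
    have iyc: "inv y \<in> carrier G" using c by simp
    have "x \<otimes> (y \<otimes> x' \<otimes> inv y) \<otimes> (y \<otimes> y') = x \<otimes> y \<otimes> x' \<otimes> (inv y \<otimes> y) \<otimes> y'"
      using c iyc by (simp only: m_assoc m_closed)
    also have "\<dots> = z \<otimes> w" using c xy by (simp add: m_assoc)
    finally have "z \<otimes> w = x \<otimes> (y \<otimes> x' \<otimes> inv y) \<otimes> (y \<otimes> y')" by simp
    moreover have "x \<otimes> (y \<otimes> x' \<otimes> inv y) \<in> P" using subgroup.m_closed[OF sP xy(1) nm[OF xy(2) xy(4)]] .
    moreover have "y \<otimes> y' \<in> Q" using subgroup.m_closed[OF sQ xy(2) xy(5)] .
    ultimately show "z \<otimes> w \<in> (\<lambda>(x,y). x \<otimes> y) ` (P \<times> Q)" using mem by blast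
  qed
qed

lemma (in group) sylow_normal:
  assumes fin: "finite (carrier G)" and lc: "lower_central G k = {\<one>}" and p: "Factorial_Ring.prime p"
    and sP: "subgroup P G" and cP: "card P = p ^ multiplicity p (order G)"
  shows "\<forall>x\<in>carrier G. \<forall>h\<in>P. x \<otimes> h \<otimes> inv x \<in> P"
proof -
  define a where "a = multiplicity p (order G)"
  define Nm where "Nm = {g \<in> carrier G. \<forall>h\<in>P. g \<otimes> h \<otimes> inv g \<in> P}"
  have Ps: "P \<subseteq> carrier G" using sP subgroup.subset by blast
  have fP: "finite P" using Ps fin finite_subset by blast
  have cinj: "inj_on (\<lambda>h. g \<otimes> h \<otimes> inv g) P" if g: "g \<in> carrier G" for g
  proof (rule inj_onI)
    fix u v assume uv: "u \<in> P" "v \<in> P" "g \<otimes> u \<otimes> inv g = g \<otimes> v \<otimes> inv g"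
    have c: "u \<in> carrier G" "v \<in> carrier G" using uv Ps by auto
    then show "u = v" using uv(3) g by simp
  qed
  have ccard: "card ((\<lambda>h. g \<otimes> h \<otimes> inv g) ` P) = card P" if g: "g \<in> carrier G" for g
    using card_image[OF cinj[OF g]] .
  have Nm_inv: "inv g \<otimes> h \<otimes> g \<in> P" if g: "g \<in> Nm" and h: "h \<in> P" for g h
  proof -
    have gc: "g \<in> carrier G" using g unfolding Nm_def by blast
    have sub: "(\<lambda>h. g \<otimes> h \<otimes> inv g) ` P \<subseteq> P" using g unfolding Nm_def by blast
    have "(\<lambda>h. g \<otimes> h \<otimes> inv g) ` P = P" using card_subset_eq[OF fP sub] ccard[OF gc] by simp
    then have "h \<in> (\<lambda>h. g \<otimes> h \<otimes> inv g) ` P" using h by simp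
    then obtain h' where h': "h' \<in> P" "h = g \<otimes> h' \<otimes> inv g" by (rule imageE) simp
    have hc: "h' \<in> carrier G" using h' Ps by auto
    have igc: "inv g \<in> carrier G" using gc by simp
    have "inv g \<otimes> h \<otimes> g = (inv g \<otimes> g) \<otimes> h' \<otimes> (inv g \<otimes> g)"
      using h'(2) gc hc igc by (simp only: m_assoc m_closed)
    also have "\<dots> = h'" using gc hc by simp
    finally show ?thesis using h' by simp
  qed
  have sNm: "subgroup Nm G"
  proof (rule subgroupI)
    show "Nm \<subseteq> carrier G" unfolding Nm_def by blast
    have "\<one> \<in> Nm" unfolding Nm_def using Ps by auto
    then show "Nm \<noteq> {}" by blast
  next
    fix g assume g: "g \<in> Nm"
    have gc: "g \<in> carrier G" using g unfolding Nm_def by blast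
    show "inv g \<in> Nm" unfolding Nm_def using Nm_inv[OF g] gc by simp
  next
    fix g1 g2 assume g: "g1 \<in> Nm" "g2 \<in> Nm"
    have gc: "g1 \<in> carrier G" "g2 \<in> carrier G" using g unfolding Nm_def by auto
    have "g1 \<otimes> g2 \<otimes> h \<otimes> inv (g1 \<otimes> g2) \<in> P" if h: "h \<in> P" for h
    proof -
      have hc: "h \<in> carrier G" using h Ps by auto
      have i: "inv g1 \<in> carrier G" "inv g2 \<in> carrier G" using gc by auto
      have "g1 \<otimes> g2 \<otimes> h \<otimes> inv (g1 \<otimes> g2) = g1 \<otimes> (g2 \<otimes> h \<otimes> inv g2) \<otimes> inv g1"
        using gc hc i by (simp add: inv_mult_group m_assoc)
      moreover have "g2 \<otimes> h \<otimes> inv g2 \<in> P" using g(2) h unfolding Nm_def by blast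
      ultimately show ?thesis using g(1) unfolding Nm_def by simp
    qed
    then show "g1 \<otimes> g2 \<in> Nm" unfolding Nm_def using gc by simp
  qed
  have PNm: "P \<subseteq> Nm"
  proof
    fix g assume g: "g \<in> P"
    have "g \<otimes> h \<otimes> inv g \<in> P" if "h \<in> P" for h
      using subgroup.m_closed[OF sP subgroup.m_closed[OF sP g that] subgroup.m_inv_closed[OF sP g]] .
    then show "g \<in> Nm" unfolding Nm_def using g Ps by auto
  qed
  have ordpos: "order G \<noteq> 0" using fin unfolding order_def by auto
  have "Nm = carrier G"
  proof (rule ccontr)
    assume ne: "Nm \<noteq> carrier G"
    obtain y where y: "y \<in> carrier G" "y \<notin> Nm" and yN: "\<And>m. m \<in> Nm \<Longrightarrow> y \<otimes> m \<otimes> inv y \<in> Nm"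
      using nil_normalizer[OF lc sNm ne] by blast
    define Q where "Q = (\<lambda>h. y \<otimes> h \<otimes> inv y) ` P"
    have QNm: "Q \<subseteq> Nm" unfolding Q_def using yN PNm by blast
    have cQ: "card Q = card P" unfolding Q_def using ccard[OF y(1)] .
    have iy: "inv y \<in> carrier G" using y by simp
    have sQ: "subgroup Q G"
    proof (rule subgroupI)
      show "Q \<subseteq> carrier G" unfolding Q_def using Ps y by auto
      show "Q \<noteq> {}" unfolding Q_def using subgroup.one_closed[OF sP] by blast
    next
      fix q assume "q \<in> Q"
      then obtain h where h: "h \<in> P" "q = y \<otimes> h \<otimes> inv y" unfolding Q_def by blast
      have hc: "h \<in> carrier G" using h Ps by auto
      have "inv q = y \<otimes> inv h \<otimes> inv y" using h(2) hc y iy by (simp add: inv_mult_group m_assoc)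
      then show "inv q \<in> Q" unfolding Q_def using subgroup.m_inv_closed[OF sP h(1)] by blast
    next
      fix q1 q2 assume "q1 \<in> Q" "q2 \<in> Q"
      then obtain h1 h2 where h: "h1 \<in> P" "q1 = y \<otimes> h1 \<otimes> inv y" "h2 \<in> P" "q2 = y \<otimes> h2 \<otimes> inv y"
        unfolding Q_def by blast
      have hc: "h1 \<in> carrier G" "h2 \<in> carrier G" using h Ps by auto
      have "q1 \<otimes> q2 = y \<otimes> h1 \<otimes> (inv y \<otimes> y) \<otimes> h2 \<otimes> inv y"
        using h(2,4) hc y iy by (simp only: m_assoc m_closed)
      also have "\<dots> = y \<otimes> (h1 \<otimes> h2) \<otimes> inv y" using hc y iy by (simp add: m_assoc)
      finally show "q1 \<otimes> q2 \<in> Q" unfolding Q_def using subgroup.m_closed[OF sP h(1,3)] by blast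
    qed
    have nm: "\<And>q h. q \<in> Q \<Longrightarrow> h \<in> P \<Longrightarrow> q \<otimes> h \<otimes> inv q \<in> P" using QNm unfolding Nm_def by blast
    define PQ where "PQ = (\<lambda>(x,y). x \<otimes> y) ` (P \<times> Q)"
    have sPQ: "subgroup PQ G" unfolding PQ_def using mult_subgroup[OF sP sQ nm] .
    have cm: "card PQ * card (P \<inter> Q) = card P * card Q" unfolding PQ_def using card_mult[OF sP sQ fin] .
    have sPQi: "subgroup (P \<inter> Q) G" using subgroups_Inter_pair[OF sP sQ] .
    have grpP: "group (G\<lparr>carrier := P\<rparr>)" using subgroup_imp_group[OF sP] .
    have "subgroup (P \<inter> Q) (G\<lparr>carrier := P\<rparr>)" using subgroup_incl'[OF sPQi sP] by blast
    then have "card (rcosets\<^bsub>G\<lparr>carrier := P\<rparr>\<^esub> (P \<inter> Q)) * card (P \<inter> Q) = order (G\<lparr>carrier := P\<rparr>)"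
      using group.lagrange[OF grpP] by blast
    then have "card (rcosets\<^bsub>G\<lparr>carrier := P\<rparr>\<^esub> (P \<inter> Q)) * card (P \<inter> Q) = p ^ a"
      using cP unfolding a_def by (simp add: order_def)
    then have d1: "card (P \<inter> Q) dvd p ^ a" using dvd_triv_right by metis
    obtain b where b: "b \<le> a" "card (P \<inter> Q) = p ^ b" using d1 divides_primepow_nat[OF p] by blast
    have "card (rcosets PQ) * card PQ = order G" using lagrange[OF sPQ] .
    then have d2: "card PQ dvd order G" using dvd_triv_right by metis
    have pp: "p > 0" using prime_gt_0_nat[OF p] .
    have "card PQ * p ^ b = p ^ (a + a - b) * p ^ b"
    proof -
      have "card PQ * p ^ b = p ^ a * p ^ a" using cm b(2) cP cQ unfolding a_def by simp
      also have "\<dots> = p ^ (a + a - b + b)" using b(1) by (simp add: power_add[symmetric])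
      also have "\<dots> = p ^ (a + a - b) * p ^ b" by (simp add: power_add)
      finally show ?thesis .
    qed
    then have cPQ: "card PQ = p ^ (a + a - b)" using pp by simp
    have nu: "\<not> is_unit p" using not_prime_unit p by blast
    have "p ^ (a + a - b) dvd order G" using d2 cPQ by simp
    then have "a + a - b \<le> multiplicity p (order G)" using multiplicity_geI[OF ordpos nu] by blast
    then have ab: "b = a" using b(1) unfolding a_def by simp
    have "card (P \<inter> Q) = card P" using b(2) ab cP unfolding a_def by simp
    then have "P \<inter> Q = P" using card_subset_eq[OF fP, of "P \<inter> Q"] by blast
    then have "P \<subseteq> Q" by blast
    moreover have fQ: "finite Q" unfolding Q_def using fP by simp
    ultimately have PQe: "P = Q" using card_subset_eq[OF fQ] cQ by simp
    have "y \<otimes> h \<otimes> inv y \<in> P" if h: "h \<in> P" for h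
    proof -
      have "y \<otimes> h \<otimes> inv y \<in> Q" unfolding Q_def using h by (rule imageI)
      then show ?thesis using PQe by simp
    qed
    then have "y \<in> Nm" unfolding Nm_def using y(1) by simp
    then show False using y(2) by blast
  qed
  then show ?thesis unfolding Nm_def by blast
qed

theorem theorem1:
  fixes \<Gamma> :: "('a, 'c) monoid_scheme" and G :: "('b, 'd) monoid_scheme"
    and n :: nat
    and P :: "nat \<Rightarrow> 'a set" and Q :: "nat \<Rightarrow> 'b set"
  assumes "finite (carrier \<Gamma>)" and "nilpotent_group \<Gamma>" and "order \<Gamma> = n"
    and "finite (carrier G)" and "nilpotent_group G" and "order G = n"
    and "\<And>p. p \<in> prime_factors n \<Longrightarrow> sylow_subgroup \<Gamma> p (P p)"
    and "\<And>p. p \<in> prime_factors n \<Longrightarrow> sylow_subgroup G p (Q p)"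
  shows "hgs_count \<Gamma> G =
    (\<Prod>p \<in> prime_factors n. hgs_count (\<Gamma>\<lparr>carrier := P p\<rparr>) (G\<lparr>carrier := Q p\<rparr>))"
proof -
  have g\<Gamma>: "group \<Gamma>" and gG: "group G" using assms(2,5) unfolding nilpotent_group_def by auto
  obtain k1 where k1: "lower_central \<Gamma> k1 = {\<one>\<^bsub>\<Gamma>\<^esub>}" using assms(2) unfolding nilpotent_group_def by blast
  obtain k2 where k2: "lower_central G k2 = {\<one>\<^bsub>G\<^esub>}" using assms(5) unfolding nilpotent_group_def by blast
  interpret \<Gamma>: group \<Gamma> by (rule g\<Gamma>)
  interpret G: group G by (rule gG)
  have n0: "n > 0" using assms(1,3) \<Gamma>.one_closed unfolding order_def by (metis card_gt_0_iff empty_iff)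
  define S where "S = prime_factors n"
  have finS: "finite S" unfolding S_def by simp
  have prem: "\<forall>p\<in>S. Factorial_Ring.prime p \<and> subgroup (P p) \<Gamma> \<and> (\<forall>x\<in>carrier \<Gamma>. \<forall>h\<in>P p. x \<otimes>\<^bsub>\<Gamma>\<^esub> h \<otimes>\<^bsub>\<Gamma>\<^esub> inv\<^bsub>\<Gamma>\<^esub> x \<in> P p)
       \<and> subgroup (Q p) G \<and> (\<forall>x\<in>carrier G. \<forall>h\<in>Q p. x \<otimes>\<^bsub>G\<^esub> h \<otimes>\<^bsub>G\<^esub> inv\<^bsub>G\<^esub> x \<in> Q p)
       \<and> card (P p) = p ^ multiplicity p n \<and> card (Q p) = p ^ multiplicity p n"
  proof
    fix p assume p: "p \<in> S"
    have pr: "Factorial_Ring.prime p" using p unfolding S_def by blast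
    have s1: "subgroup (P p) \<Gamma>" "card (P p) = p ^ multiplicity p (order \<Gamma>)"
      using assms(7) p unfolding S_def sylow_subgroup_def by auto
    have s2: "subgroup (Q p) G" "card (Q p) = p ^ multiplicity p (order G)"
      using assms(8) p unfolding S_def sylow_subgroup_def by auto
    show "Factorial_Ring.prime p \<and> subgroup (P p) \<Gamma> \<and> (\<forall>x\<in>carrier \<Gamma>. \<forall>h\<in>P p. x \<otimes>\<^bsub>\<Gamma>\<^esub> h \<otimes>\<^bsub>\<Gamma>\<^esub> inv\<^bsub>\<Gamma>\<^esub> x \<in> P p)
       \<and> subgroup (Q p) G \<and> (\<forall>x\<in>carrier G. \<forall>h\<in>Q p. x \<otimes>\<^bsub>G\<^esub> h \<otimes>\<^bsub>G\<^esub> inv\<^bsub>G\<^esub> x \<in> Q p)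
       \<and> card (P p) = p ^ multiplicity p n \<and> card (Q p) = p ^ multiplicity p n"
      using pr s1 s2 \<Gamma>.sylow_normal[OF assms(1) k1 pr s1] G.sylow_normal[OF assms(4) k2 pr s2] assms(3,6)
      by simp
  qed
  obtain H H' where sH: "subgroup H \<Gamma>" and sH': "subgroup H' G"
    and cH: "card H = (\<Prod>p\<in>S. p ^ multiplicity p n)" and cH': "card H' = (\<Prod>p\<in>S. p ^ multiplicity p n)"
    and hc: "hgs_count (\<Gamma>\<lparr>carrier := H\<rparr>) (G\<lparr>carrier := H'\<rparr>) =
         (\<Prod>p\<in>S. hgs_count (\<Gamma>\<lparr>carrier := P p\<rparr>) (G\<lparr>carrier := Q p\<rparr>))"
    using assembly[OF g\<Gamma> gG assms(1) assms(4) finS, of P Q "\<lambda>p. multiplicity p n"] prem by blast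
  have prodn: "(\<Prod>p\<in>S. p ^ multiplicity p n) = n" unfolding S_def using prime_factorization_nat[OF n0] by simp
  have "H = carrier \<Gamma>"
    using card_subset_eq[OF assms(1) subgroup.subset[OF sH]] cH prodn assms(3) unfolding order_def by simp
  moreover have "H' = carrier G"
    using card_subset_eq[OF assms(4) subgroup.subset[OF sH']] cH' prodn assms(6) unfolding order_def by simp
  ultimately show ?thesis using hc unfolding S_def by simp
qed


end
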